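(* Let $G$ be a finite graph on the vertex set $\{x_1,\ldots,x_n\}$ with no loops, no multiple edges and no isolated vertices, and for $q\geq 1$ let $\mathcal{G}(I(G)^q)$ denote the minimal set of monomial generators of $I(G)^q$. The following conditions are equivalent: (i) $\mathcal{G}(I(G)^q)$ is a polymatroid for some $q\geq 1$; (ii) $\mathcal{G}(I(G)^q)$ is a polymatroid for all $q\geq 1$; (iii) $G$ is a complete multipartite graph. Furthermore, if $G$ is a complete multipartite graph, then for all $q\geq 1$ the toric ideal $J_{\mathcal{G}(I(G)^q)}$ of $\mathcal{G}(I(G)^q)$ is generated by symmetric exchange binomials.
   Context: Let $S=K[x_1,\ldots,x_n]$ be a polynomial ring over a field $K$. A finite set $\mathcal{B}$ of monomials of $S$ is called a polymatroid if (i) all elements of $\mathcal{B}$ have the same degree and (ii) whenever $u=x_1^{a_1}\cdots x_n^{a_n}$ and $v=x_1^{b_1}\cdots x_n^{b_n}$ belong to $\mathcal{B}$ with $a_\xi>b_\xi$, there is $\rho$ with $a_\rho<b_\rho$ such that $x_\rho u/x_\xi\in\mathcal{B}$. The edge ideal $I(G)$ is the ideal of $S$ generated by the monomials $x_ix_j$ with $\{x_i,x_j\}$ an edge of $G$. For a finite set of monomials $\mathcal{B}=\{w_1,\ldots,w_s\}$, let $T=K[z_1,\ldots,z_s]$ and $\pi:T\to K[w_1,\ldots,w_s]$ be the $K$-algebra homomorphism with $\pi(z_i)=w_i$; the toric ideal of $\mathcal{B}$ is $J_{\mathcal{B}}=\ker\pi$. A symmetric exchange binomial of $\mathcal{B}$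 is a binomial $z_iz_j-z_{i_0}z_{j_0}$ where $w_i=x_1^{a_1}\cdots x_n^{a_n}$, $w_j=x_1^{b_1}\cdots x_n^{b_n}$, and there are indices $\xi,\rho$ with $a_\xi>b_\xi$, $a_\rho<b_\rho$ such that $w_{i_0}=x_\rho w_i/x_\xi$ and $w_{j_0}=x_\xi w_j/x_\rho$ both belong to $\mathcal{B}$. A complete multipartite graph is a graph whose vertex set is partitioned into $m\geq 2$ nonempty parts $V_1,\ldots,V_m$, with edges exactly the pairs $\{x,y\}$ with $x,y$ in different parts. *)

theory Defs
  imports Main "HOL-Library.Poly_Mapping" "HOL-Library.Multiset"
begin

text \<open>Monomials are exponent vectors (finitely supported maps to nat);
 polynomials over a field are finitely supported maps from monomials to coefficients.\<close>

definition simple_graph :: "'a set \<Rightarrow> 'a set set \<Rightarrow> bool" where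
  "simple_graph V E \<longleftrightarrow> finite V \<and>
     (\<forall>e\<in>E. \<exists>x y. x \<noteq> y \<and> x \<in> V \<and> y \<in> V \<and> e = {x, y})"

definition no_isolated :: "'a set \<Rightarrow> 'a set set \<Rightarrow> bool" where
  "no_isolated V E \<longleftrightarrow> (\<forall>x\<in>V. \<exists>e\<in>E. x \<in> e)"

definition complete_multipartite :: "'a set \<Rightarrow> 'a set set \<Rightarrow> bool" where
  "complete_multipartite V E \<longleftrightarrow> (\<exists>P. finite P \<and> card P \<ge> 2 \<and> {} \<notin> P \<and> \<Union>P = V \<and>
      (\<forall>A\<in>P. \<forall>B\<in>P. A \<noteq> B \<longrightarrow> A \<inter> B = {}) \<and>
      E = {{x, y} | x y. \<exists>A\<in>P. \<exists>B\<in>P. A \<noteq> B \<and> x \<in> A \<and> y \<in> B})"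

definition edge_mon :: "'a set \<Rightarrow> 'a \<Rightarrow>\<^sub>0 nat" where
  "edge_mon e = (\<Sum>x\<in>e. Poly_Mapping.single x 1)"

definition pow_gens :: "'a set set \<Rightarrow> nat \<Rightarrow> ('a \<Rightarrow>\<^sub>0 nat) set" where
  "pow_gens E q = {(\<Sum>e\<in>#M. edge_mon e) | M. size M = q \<and> set_mset M \<subseteq> E}"

definition mon_dvd :: "('a \<Rightarrow>\<^sub>0 nat) \<Rightarrow> ('a \<Rightarrow>\<^sub>0 nat) \<Rightarrow> bool" where
  "mon_dvd u v \<longleftrightarrow> (\<forall>x. Poly_Mapping.lookup u x \<le> Poly_Mapping.lookup v x)"

definition min_gens :: "'a set set \<Rightarrow> nat \<Rightarrow> ('a \<Rightarrow>\<^sub>0 nat) set" where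
  "min_gens E q = {u \<in> pow_gens E q. \<forall>v\<in>pow_gens E q. mon_dvd v u \<longrightarrow> v = u}"

definition mdeg :: "('a \<Rightarrow>\<^sub>0 nat) \<Rightarrow> nat" where
  "mdeg u = (\<Sum>x\<in>Poly_Mapping.keys u. Poly_Mapping.lookup u x)"

definition polymatroid :: "('a \<Rightarrow>\<^sub>0 nat) set \<Rightarrow> bool" where
  "polymatroid B \<longleftrightarrow> finite B \<and> (\<forall>u\<in>B. \<forall>v\<in>B. mdeg u = mdeg v) \<and>
     (\<forall>u\<in>B. \<forall>v\<in>B. \<forall>\<xi>. Poly_Mapping.lookup u \<xi> > Poly_Mapping.lookup v \<xi> \<longrightarrow>
        (\<exists>\<rho>. Poly_Mapping.lookup u \<rho> < Poly_Mapping.lookup v \<rho> \<and> u - Poly_Mapping.single \<xi> 1 + Poly_Mapping.single \<rho> 1 \<in> B))"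

text \<open>Polynomial ring T = K[z_w : w \<in> B]: variables are indexed by the monomials w of B.\<close>
definition T_ring :: "('a \<Rightarrow>\<^sub>0 nat) set \<Rightarrow> ((('a \<Rightarrow>\<^sub>0 nat) \<Rightarrow>\<^sub>0 nat) \<Rightarrow>\<^sub>0 'k::field) set" where
  "T_ring B = {p. \<forall>\<alpha>\<in>Poly_Mapping.keys p. Poly_Mapping.keys \<alpha> \<subseteq> B}"

text \<open>The K-algebra homomorphism \<pi> : T \<rightarrow> S with \<pi>(z_w) = w.\<close>
definition toric_map :: "((('a \<Rightarrow>\<^sub>0 nat) \<Rightarrow>\<^sub>0 nat) \<Rightarrow>\<^sub>0 'k::field) \<Rightarrow> (('a \<Rightarrow>\<^sub>0 nat) \<Rightarrow>\<^sub>0 'k)" where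
  "toric_map p = (\<Sum>\<alpha>\<in>Poly_Mapping.keys p. Poly_Mapping.single 0 (Poly_Mapping.lookup p \<alpha>) *
       (\<Prod>w\<in>Poly_Mapping.keys \<alpha>. (Poly_Mapping.single w 1) ^ (Poly_Mapping.lookup \<alpha> w)))"

definition toric_ideal :: "('a \<Rightarrow>\<^sub>0 nat) set \<Rightarrow> ((('a \<Rightarrow>\<^sub>0 nat) \<Rightarrow>\<^sub>0 nat) \<Rightarrow>\<^sub>0 'k::field) set" where
  "toric_ideal B = {p \<in> T_ring B. toric_map p = 0}"

definition ideal_gen :: "'r::comm_ring_1 set \<Rightarrow> 'r set \<Rightarrow> 'r set" where
  "ideal_gen R F = {sum_list (map2 (*) cs fs) | cs fs.
       length cs = length fs \<and> set cs \<subseteq> R \<and> set fs \<subseteq> F}"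

definition zmon :: "('a \<Rightarrow>\<^sub>0 nat) \<Rightarrow> ('a \<Rightarrow>\<^sub>0 nat) \<Rightarrow> ((('a \<Rightarrow>\<^sub>0 nat) \<Rightarrow>\<^sub>0 nat) \<Rightarrow>\<^sub>0 'k::field)" where
  "zmon u v = Poly_Mapping.single (Poly_Mapping.single u 1 + Poly_Mapping.single v 1) 1"

definition sym_exchange_binomials ::
  "('a \<Rightarrow>\<^sub>0 nat) set \<Rightarrow> ((('a \<Rightarrow>\<^sub>0 nat) \<Rightarrow>\<^sub>0 nat) \<Rightarrow>\<^sub>0 'k::field) set" where
  "sym_exchange_binomials B = {zmon u v - zmon u0 v0 | u v u0 v0.
      u \<in> B \<and> v \<in> B \<and> (\<exists>\<xi> \<rho>. Poly_Mapping.lookup u \<xi> > Poly_Mapping.lookup v \<xi> \<and> Poly_Mapping.lookup u \<rho> < Poly_Mapping.lookup v \<rho> \<and>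
         u0 = u - Poly_Mapping.single \<xi> 1 + Poly_Mapping.single \<rho> 1 \<and>
         v0 = v - Poly_Mapping.single \<rho> 1 + Poly_Mapping.single \<xi> 1 \<and> u0 \<in> B \<and> v0 \<in> B)}"

end

theory Submission
  imports Defs
begin

abbreviation lk where "lk \<equiv> Poly_Mapping.lookup"
abbreviation ks where "ks \<equiv> Poly_Mapping.keys"
abbreviation sg where "sg \<equiv> Poly_Mapping.single"

definition psum :: "('a \<Rightarrow>\<^sub>0 nat) \<Rightarrow> 'a set \<Rightarrow> nat" where
  "psum u A = (\<Sum>x\<in>A. lk u x)"

definition sw :: "('a \<Rightarrow>\<^sub>0 nat) \<Rightarrow> 'a \<Rightarrow> 'a \<Rightarrow> ('a \<Rightarrow>\<^sub>0 nat)" where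
  "sw u a b = u - Poly_Mapping.single a 1 + Poly_Mapping.single b 1"

lemma lookup_sw: "lk (sw u a b) x = lk u x - (if x = a then 1 else 0) + (if x = b then 1 else 0)"
  by (auto simp: sw_def lookup_add lookup_minus lookup_single)

lemma lookup_sw': "lk u a \<ge> 1 \<Longrightarrow> lk (sw u a b) x + (if x = a then 1 else 0) = lk u x + (if x = b then 1 else 0)"
  by (auto simp: lookup_sw)

lemma sum_sw: assumes "lk u a \<ge> 1" "finite S"
  shows "(\<Sum>x\<in>S. lk (sw u a b) x) + (if a \<in> S then 1 else 0) = (\<Sum>x\<in>S. lk u x) + (if b \<in> S then 1 else 0)"
proof -
  have "(\<Sum>x\<in>S. lk (sw u a b) x) + (\<Sum>x\<in>S. (if x = a then 1 else 0)) =
        (\<Sum>x\<in>S. lk u x) + (\<Sum>x\<in>S. (if x = b then 1 else 0))"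
    using lookup_sw'[OF assms(1)] by (simp add: sum.distrib[symmetric])
  moreover have "(\<Sum>x\<in>S. (if x = a then 1 else 0)) = (if a \<in> S then 1 else (0::nat))"
    using assms(2) by (simp add: sum.delta)
  moreover have "(\<Sum>x\<in>S. (if x = b then 1 else 0)) = (if b \<in> S then 1 else (0::nat))"
    using assms(2) by (simp add: sum.delta)
  ultimately show ?thesis by simp
qed

lemma psum_sw: "lk u a \<ge> 1 \<Longrightarrow> finite S \<Longrightarrow> psum (sw u a b) S + (if a \<in> S then 1 else 0) = psum u S + (if b \<in> S then 1 else 0)"
  unfolding psum_def by (rule sum_sw)

lemma keys_sw: "ks (sw u a b) \<subseteq> ks u \<union> {b}"
  by (auto simp: in_keys_iff lookup_sw split: if_splits)

lemma sw_sw: "lk u a \<ge> 1 \<Longrightarrow> lk (sw u a b) b \<ge> 1 \<Longrightarrow> sw (sw u a b) b c = sw u a c"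
  by (rule poly_mapping_eqI) (auto simp: lookup_sw)

lemma sw_back: "lk u a \<ge> 1 \<Longrightarrow> sw (sw u a b) b a = u"
  by (rule poly_mapping_eqI) (auto simp: lookup_sw)


lemma lk_sum_mset: "lk (\<Sum>e\<in>#M. f e) x = (\<Sum>e\<in>#M. lk (f e) x)"
  by (induction M) (auto simp: lookup_add)

lemma lookup_edge_mon: "finite e \<Longrightarrow> lk (edge_mon e) z = (if z \<in> e then 1 else 0)"
  by (simp add: edge_mon_def lookup_sum lookup_single when_def)

lemma sum_indic: "finite V \<Longrightarrow> (\<Sum>z\<in>V. (if z \<in> e then 1 else 0::nat)) = card (V \<inter> e)"
  by (simp add: sum.If_cases Int_def)

lemma sg_graph_edge: "simple_graph V E \<Longrightarrow> e \<in> E \<Longrightarrow> \<exists>x y. x \<noteq> y \<and> x \<in> V \<and> y \<in> V \<and> e = {x, y}"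
  by (auto simp: simple_graph_def)

lemma pow_gens_aux:
  assumes "simple_graph V E" "set_mset M \<subseteq> E"
  shows "ks (\<Sum>e\<in>#M. edge_mon e) \<subseteq> V \<and> (\<Sum>x\<in>V. lk (\<Sum>e\<in>#M. edge_mon e) x) = 2 * size M"
  using assms(2)
proof (induction M)
  case empty
  then show ?case by simp
next
  case (add e M)
  then have IH: "ks (\<Sum>e\<in>#M. edge_mon e) \<subseteq> V" "(\<Sum>x\<in>V. lk (\<Sum>e\<in>#M. edge_mon e) x) = 2 * size M"
    by auto
  from add.prems have "e \<in> E" by auto
  then obtain x y where xy: "x \<noteq> y" "x \<in> V" "y \<in> V" "e = {x, y}" using sg_graph_edge[OF assms(1)] by blast
  have fin: "finite V" using assms(1) by (simp add: simple_graph_def)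
  have ke: "ks (edge_mon e) \<subseteq> V"
    using xy by (auto simp: in_keys_iff lookup_edge_mon split: if_splits)
  have se: "(\<Sum>z\<in>V. lk (edge_mon e) z) = 2"
  proof -
    have "(\<Sum>z\<in>V. lk (edge_mon e) z) = (\<Sum>z\<in>V. (if z \<in> e then 1 else 0))"
      using xy by (intro sum.cong) (simp_all only: lookup_edge_mon finite.emptyI finite_insert)
    also have "\<dots> = card (V \<inter> e)" using fin by (rule sum_indic)
    also have "V \<inter> e = {x, y}" using xy by auto
    finally show ?thesis using xy by simp
  qed
  have "ks (\<Sum>e\<in>#add_mset e M. edge_mon e) \<subseteq> V"
    using ke IH(1) keys_add[of "edge_mon e" "\<Sum>e\<in>#M. edge_mon e"] by auto
  moreover have "(\<Sum>z\<in>V. lk (\<Sum>e\<in>#add_mset e M. edge_mon e) z) = 2 * size (add_mset e M)"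
    using se IH(2) by (simp add: lookup_add sum.distrib)
  ultimately show ?case by blast
qed

lemma pow_gens_props:
  assumes "simple_graph V E" "u \<in> pow_gens E q"
  shows "ks u \<subseteq> V" "(\<Sum>x\<in>V. lk u x) = 2 * q"
proof -
  obtain M where M: "u = (\<Sum>e\<in>#M. edge_mon e)" "size M = q" "set_mset M \<subseteq> E"
    using assms(2) unfolding pow_gens_def by blast
  show "ks u \<subseteq> V" "(\<Sum>x\<in>V. lk u x) = 2 * q"
    using pow_gens_aux[OF assms(1) M(3)] M(1,2) by simp_all
qed

lemma eq_by_sum:
  fixes u v :: "'a \<Rightarrow>\<^sub>0 nat"
  assumes "finite V" "ks u \<subseteq> V" "ks v \<subseteq> V" "\<forall>x. lk v x \<le> lk u x"
    "(\<Sum>x\<in>V. lk u x) = (\<Sum>x\<in>V. lk v x)"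
  shows "v = u"
proof (rule ccontr)
  assume "v \<noteq> u"
  then obtain x where x: "lk v x \<noteq> lk u x" by (meson poly_mapping_eqI)
  have "lk v x \<le> lk u x" using assms(4) by simp
  then have "lk v x < lk u x" using x by simp
  then have "x \<in> ks u" by (simp add: in_keys_iff)
  then have "x \<in> V" using assms(2) by blast
  then have "(\<Sum>x\<in>V. lk v x) < (\<Sum>x\<in>V. lk u x)"
    using assms(1,4) \<open>lk v x < lk u x\<close> by (intro sum_strict_mono_ex1) auto
  then show False using assms(5) by simp
qed

lemma min_gens_eq:
  assumes "simple_graph V E"
  shows "min_gens E q = pow_gens E q"
proof -
  have fin: "finite V" using assms by (simp add: simple_graph_def)
  have "\<forall>v\<in>pow_gens E q. mon_dvd v u \<longrightarrow> v = u" if "u \<in> pow_gens E q" for u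
  proof (intro ballI impI)
    fix v assume v: "v \<in> pow_gens E q" "mon_dvd v u"
    show "v = u"
      apply (rule eq_by_sum[OF fin])
      using pow_gens_props[OF assms that] pow_gens_props[OF assms v(1)] v(2) by (auto simp: mon_dvd_def)
  qed
  then show ?thesis by (auto simp: min_gens_def)
qed

lemma mdeg_V: "finite V \<Longrightarrow> ks u \<subseteq> V \<Longrightarrow> mdeg u = (\<Sum>x\<in>V. lk u x)"
  unfolding mdeg_def by (rule sum.mono_neutral_left) (auto simp: in_keys_iff)

lemma finite_E: "simple_graph V E \<Longrightarrow> finite E"
proof -
  assume a: "simple_graph V E"
  then have "E \<subseteq> Pow V" by (force simp: simple_graph_def)
  moreover have "finite V" using a by (simp add: simple_graph_def)
  ultimately show "finite E" by (meson finite_Pow_iff finite_subset)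
qed

lemma finite_pow_gens: "simple_graph V E \<Longrightarrow> finite (pow_gens E q)"
proof -
  assume a: "simple_graph V E"
  have "pow_gens E q = (\<lambda>M. \<Sum>e\<in>#M. edge_mon e) ` multisets_of_size E q"
    by (auto simp: pow_gens_def multisets_of_size_def)
  then show ?thesis using finite_E[OF a] by (simp add: finite_multisets_of_size)
qed


definition partn :: "'a set set \<Rightarrow> 'a set \<Rightarrow> bool" where
  "partn P V \<longleftrightarrow> finite V \<and> finite P \<and> {} \<notin> P \<and> \<Union>P = V \<and> (\<forall>A\<in>P. \<forall>B\<in>P. A \<noteq> B \<longrightarrow> A \<inter> B = {})"

definition cmE :: "'a set set \<Rightarrow> 'a set set" where
  "cmE P = {{x, y} | x y. \<exists>A\<in>P. \<exists>B\<in>P. A \<noteq> B \<and> x \<in> A \<and> y \<in> B}"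

definition BB :: "'a set set \<Rightarrow> 'a set \<Rightarrow> nat \<Rightarrow> ('a \<Rightarrow>\<^sub>0 nat) set" where
  "BB P V q = {u. ks u \<subseteq> V \<and> (\<Sum>x\<in>V. lk u x) = 2 * q \<and> (\<forall>A\<in>P. psum u A \<le> q)}"

lemma partn_part: "partn P V \<Longrightarrow> x \<in> V \<Longrightarrow> \<exists>A\<in>P. x \<in> A"
  by (auto simp: partn_def)

lemma partn_uniq: "partn P V \<Longrightarrow> A \<in> P \<Longrightarrow> B \<in> P \<Longrightarrow> x \<in> A \<Longrightarrow> x \<in> B \<Longrightarrow> A = B"
  by (auto simp: partn_def)

lemma partn_sub: "partn P V \<Longrightarrow> A \<in> P \<Longrightarrow> A \<subseteq> V"
  by (auto simp: partn_def)

lemma partn_fin: "partn P V \<Longrightarrow> A \<in> P \<Longrightarrow> finite A"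
  by (meson finite_subset partn_def partn_sub)

lemma sum_partn:
  assumes "partn P V"
  shows "(\<Sum>x\<in>V. f x) = (\<Sum>A\<in>P. (\<Sum>x\<in>A. f x))"
proof -
  have "sum f (\<Union>P) = (sum \<circ> sum) f P"
    apply (rule sum.Union_disjoint)
    using assms partn_fin[OF assms] by (auto simp: partn_def)
  then show ?thesis using assms by (simp add: partn_def)
qed

lemma psum_le_total:
  assumes "partn P V" "S \<subseteq> P"
  shows "(\<Sum>A\<in>S. psum u A) \<le> (\<Sum>x\<in>V. lk u x)"
proof -
  have "(\<Sum>A\<in>S. psum u A) \<le> (\<Sum>A\<in>P. psum u A)"
    using assms by (intro sum_mono2) (auto simp: partn_def)
  also have "\<dots> = (\<Sum>x\<in>V. lk u x)" using sum_partn[OF assms(1), of "lk u"] by (simp add: psum_def)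
  finally show ?thesis .
qed

lemma psum2:
  assumes "partn P V" "A \<in> P" "B \<in> P" "A \<noteq> B"
  shows "psum u A + psum u B \<le> (\<Sum>x\<in>V. lk u x)"
  using psum_le_total[OF assms(1), of "{A, B}" u] assms by simp

lemma psum3:
  assumes "partn P V" "A \<in> P" "B \<in> P" "C \<in> P" "A \<noteq> B" "A \<noteq> C" "B \<noteq> C"
  shows "psum u A + psum u B + psum u C \<le> (\<Sum>x\<in>V. lk u x)"
  using psum_le_total[OF assms(1), of "{A, B, C}" u] assms by (simp add: add.assoc)

lemma psum_ge: "finite A \<Longrightarrow> x \<in> A \<Longrightarrow> lk u x \<le> psum u A"
  unfolding psum_def by (rule member_le_sum) auto

lemma psum_pos: assumes "psum u A > 0" shows "\<exists>x\<in>A. lk u x > 0"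
proof (rule ccontr)
  assume "\<not> ?thesis"
  then have "\<forall>x\<in>A. lk u x = 0" by simp
  then have "psum u A = 0" by (simp add: psum_def)
  then show False using assms by simp
qed

lemma push:
  fixes u v :: "'a \<Rightarrow>\<^sub>0 nat"
  assumes "finite V" "C \<subseteq> V" "(\<Sum>x\<in>V. lk u x) = (\<Sum>x\<in>V. lk v x)"
    "psum v C \<le> psum u C" "\<forall>x\<in>V - C. lk v x \<le> lk u x" "a \<in> V - C" "lk v a < lk u a"
  shows False
proof -
  have fC: "finite C" using assms(1,2) finite_subset by blast
  have "(\<Sum>x\<in>V - C. lk v x) < (\<Sum>x\<in>V - C. lk u x)"
    using assms(1,5,6,7) by (intro sum_strict_mono_ex1) auto
  moreover have "(\<Sum>x\<in>V. lk u x) = psum u C + (\<Sum>x\<in>V - C. lk u x)"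
    using sum.subset_diff[OF assms(2,1), of "lk u"] unfolding psum_def by linarith
  moreover have "(\<Sum>x\<in>V. lk v x) = psum v C + (\<Sum>x\<in>V - C. lk v x)"
    using sum.subset_diff[OF assms(2,1), of "lk v"] unfolding psum_def by linarith
  ultimately show False using assms(3,4) by linarith
qed

lemma argmax: "finite S \<Longrightarrow> S \<noteq> {} \<Longrightarrow> \<exists>a\<in>S. \<forall>b\<in>S. (f b :: nat) \<le> f a"
proof -
  assume "finite S" "S \<noteq> {}"
  then have "Max (f ` S) \<in> f ` S" by simp
  then obtain a where "a \<in> S" "f a = Max (f ` S)" by auto
  then show ?thesis using \<open>finite S\<close> by (metis Max_ge finite_imageI image_eqI)
qed

lemma sw_BB:
  assumes "partn P V" "u \<in> BB P V q" "lk u a \<ge> 1" "b \<in> V"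
    "\<And>C. C \<in> P \<Longrightarrow> b \<in> C \<Longrightarrow> a \<notin> C \<Longrightarrow> psum u C < q"
  shows "sw u a b \<in> BB P V q"
proof -
  have fin: "finite V" using assms(1) by (simp add: partn_def)
  have aV: "a \<in> V" using assms(2,3) by (auto simp: BB_def in_keys_iff)
  have "ks (sw u a b) \<subseteq> V" using keys_sw[of u a b] assms(2,4) by (auto simp: BB_def)
  moreover have "(\<Sum>x\<in>V. lk (sw u a b) x) = 2 * q"
    using sum_sw[OF assms(3) fin, of b] aV assms(2,4) by (simp add: BB_def)
  moreover have "psum (sw u a b) C \<le> q" if C: "C \<in> P" for C
  proof -
    have e: "psum (sw u a b) C + (if a \<in> C then 1 else 0) = psum u C + (if b \<in> C then 1 else 0)"
      using psum_sw[OF assms(3) partn_fin[OF assms(1) C]] .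
    have "psum u C \<le> q" using assms(2) C by (simp add: BB_def)
    then show ?thesis using e assms(5)[OF C] by (auto split: if_splits)
  qed
  ultimately show ?thesis by (simp add: BB_def)
qed

lemma find_rho:
  assumes "partn P V" "u \<in> BB P V q" "v \<in> BB P V q" "lk u \<xi> > lk v \<xi>"
  shows "\<exists>\<rho>. lk u \<rho> < lk v \<rho> \<and> (\<forall>C\<in>P. \<rho> \<in> C \<longrightarrow> \<xi> \<notin> C \<longrightarrow> psum u C < q)"
proof -
  have fin: "finite V" using assms(1) by (simp add: partn_def)
  have u1: "lk u \<xi> \<ge> 1" using assms(4) by simp
  have xiV: "\<xi> \<in> V" using assms(2) u1 by (auto simp: BB_def in_keys_iff)
  obtain A where A: "A \<in> P" "\<xi> \<in> A" using partn_part[OF assms(1) xiV] by blast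
  have sums: "(\<Sum>x\<in>V. lk u x) = (\<Sum>x\<in>V. lk v x)" "(\<Sum>x\<in>V. lk u x) = 2 * q"
    using assms(2,3) by (auto simp: BB_def)
  have rhoV: "\<rho> \<in> V" if "lk u \<rho> < lk v \<rho>" for \<rho>
    using assms(3) that by (auto simp: BB_def in_keys_iff)
  show "\<exists>\<rho>. lk u \<rho> < lk v \<rho> \<and> (\<forall>C\<in>P. \<rho> \<in> C \<longrightarrow> \<xi> \<notin> C \<longrightarrow> psum u C < q)"
  proof (rule ccontr)
    assume N0: "\<not> ?thesis"
    have N: "\<exists>C\<in>P. \<rho> \<in> C \<and> \<xi> \<notin> C \<and> q \<le> psum u C" if "lk u \<rho> < lk v \<rho>" for \<rho>
      using N0 that by (meson not_less)
    have "\<exists>\<rho>0. lk u \<rho>0 < lk v \<rho>0"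
    proof (rule ccontr)
      assume "\<not> ?thesis"
      then have "\<forall>x\<in>V - {}. lk v x \<le> lk u x" by (meson not_le)
      then show False using push[OF fin _ sums(1), of "{}" \<xi>] xiV assms(4) by (simp add: psum_def)
    qed
    then obtain \<rho>0 where r0: "lk u \<rho>0 < lk v \<rho>0" by blast
    from N[OF r0] obtain C0 where C0: "C0 \<in> P" "\<rho>0 \<in> C0" "\<xi> \<notin> C0" "psum u C0 \<ge> q" by blast
    have C0q: "psum u C0 = q" using C0 assms(2) by (force simp: BB_def)
    have sub: "C0 \<subseteq> V" using partn_sub[OF assms(1) C0(1)] .
    have AC0: "A \<noteq> C0" using A C0 by blast
    have pA: "psum u A \<ge> 1" using psum_ge[OF partn_fin[OF assms(1) A(1)] A(2), of u] u1 by simp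
    have le: "lk v x \<le> lk u x" if x: "x \<in> V - C0" for x
    proof (rule ccontr)
      assume "\<not> ?thesis"
      then have lt: "lk u x < lk v x" by simp
      from N[OF lt] obtain C where C: "C \<in> P" "x \<in> C" "\<xi> \<notin> C" "psum u C \<ge> q" by blast
      have CC0: "C \<noteq> C0" using C x by blast
      have AC: "A \<noteq> C" using A C by blast
      have "psum u A + psum u C + psum u C0 \<le> 2 * q"
        using psum3[OF assms(1) A(1) C(1) C0(1) AC AC0 CC0, of u] sums(2) by simp
      then show False using pA C(4) C0q by linarith
    qed
    have "psum v C0 \<le> psum u C0" using C0q assms(3) C0(1) by (simp add: BB_def)
    moreover have "\<forall>x\<in>V - C0. lk v x \<le> lk u x" using le by blast
    moreover have "\<xi> \<in> V - C0" using xiV C0(3) by blast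
    ultimately show False using push[OF fin sub sums(1)] assms(4) by blast
  qed
qed

lemma BB_exchange:
  assumes "partn P V" "u \<in> BB P V q" "v \<in> BB P V q" "lk u \<xi> > lk v \<xi>"
  shows "\<exists>\<rho>. lk u \<rho> < lk v \<rho> \<and> sw u \<xi> \<rho> \<in> BB P V q"
proof -
  have fin: "finite V" using assms(1) by (simp add: partn_def)
  have u1: "lk u \<xi> \<ge> 1" using assms(4) by simp
  have xiV: "\<xi> \<in> V" using assms(2) u1 by (auto simp: BB_def in_keys_iff)
  obtain A where A: "A \<in> P" "\<xi> \<in> A" using partn_part[OF assms(1) xiV] by blast
  have sums: "(\<Sum>x\<in>V. lk u x) = (\<Sum>x\<in>V. lk v x)" "(\<Sum>x\<in>V. lk u x) = 2 * q"
    using assms(2,3) by (auto simp: BB_def)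
  have rhoV: "\<rho> \<in> V" if "lk u \<rho> < lk v \<rho>" for \<rho>
    using assms(3) that by (auto simp: BB_def in_keys_iff)
  show ?thesis
  proof (cases "\<exists>\<rho>\<in>A. lk u \<rho> < lk v \<rho>")
    case True
    then obtain \<rho> where r: "\<rho> \<in> A" "lk u \<rho> < lk v \<rho>" by blast
    have "sw u \<xi> \<rho> \<in> BB P V q"
      using sw_BB[OF assms(1,2) u1 rhoV[OF r(2)]] partn_uniq[OF assms(1) _ A(1) _ r(1)] A(2) by blast
    then show ?thesis using r by blast
  next
    case False
    have "\<exists>\<rho>. lk u \<rho> < lk v \<rho> \<and> (\<forall>C\<in>P. \<rho> \<in> C \<longrightarrow> \<xi> \<notin> C \<longrightarrow> psum u C < q)"
    proof (rule ccontr)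
      assume N0: "\<not> ?thesis"
      have N: "\<exists>C\<in>P. \<rho> \<in> C \<and> \<xi> \<notin> C \<and> q \<le> psum u C" if "lk u \<rho> < lk v \<rho>" for \<rho>
        using N0 that by (meson not_less)
      have "\<exists>\<rho>0. lk u \<rho>0 < lk v \<rho>0"
      proof (rule ccontr)
        assume "\<not> ?thesis"
        then have "\<forall>x\<in>V - {}. lk v x \<le> lk u x" by (meson not_le)
        then show False using push[OF fin _ sums(1), of "{}" \<xi>] xiV assms(4) by (simp add: psum_def)
      qed
      then obtain \<rho>0 where r0: "lk u \<rho>0 < lk v \<rho>0" by blast
      from N[OF r0] obtain C0 where C0: "C0 \<in> P" "\<rho>0 \<in> C0" "\<xi> \<notin> C0" "psum u C0 \<ge> q" by blast
      have C0q: "psum u C0 = q" using C0 assms(2) by (force simp: BB_def)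
      have sub: "C0 \<subseteq> V" using partn_sub[OF assms(1) C0(1)] .
      have AC0: "A \<noteq> C0" using A C0 by blast
      have pA: "psum u A \<ge> 1" using psum_ge[OF partn_fin[OF assms(1) A(1)] A(2), of u] u1 by simp
      have le: "lk v x \<le> lk u x" if x: "x \<in> V - C0" for x
      proof (rule ccontr)
        assume "\<not> ?thesis"
        then have lt: "lk u x < lk v x" by simp
        from N[OF lt] obtain C where C: "C \<in> P" "x \<in> C" "\<xi> \<notin> C" "psum u C \<ge> q" by blast
        have CC0: "C \<noteq> C0" using C x by blast
        have AC: "A \<noteq> C" using A C by blast
        have "psum u A + psum u C + psum u C0 \<le> 2 * q"
          using psum3[OF assms(1) A(1) C(1) C0(1) AC AC0 CC0, of u] sums(2) by simp
        then show False using pA C(4) C0q by linarith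
      qed
      have "psum v C0 \<le> psum u C0" using C0q assms(3) C0(1) by (simp add: BB_def)
      moreover have "\<forall>x\<in>V - C0. lk v x \<le> lk u x" using le by blast
      moreover have "\<xi> \<in> V - C0" using xiV C0(3) by blast
      ultimately show False using push[OF fin sub sums(1)] assms(4) by blast
    qed
    then obtain \<rho> where r: "lk u \<rho> < lk v \<rho>" "\<forall>C\<in>P. \<rho> \<in> C \<longrightarrow> \<xi> \<notin> C \<longrightarrow> psum u C < q"
      by blast
    have "sw u \<xi> \<rho> \<in> BB P V q"
      by (rule sw_BB[OF assms(1,2) u1 rhoV[OF r(1)]]) (use r(2) in blast)
    then show ?thesis using r by blast
  qed
qed


lemma cmE_edge: "e \<in> cmE P \<Longrightarrow> \<exists>x y A B. A \<in> P \<and> B \<in> P \<and> A \<noteq> B \<and> x \<in> A \<and> y \<in> B \<and> e = {x, y}"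
  by (auto simp: cmE_def)

lemma cm_simple: assumes "partn P V" shows "simple_graph V (cmE P)"
proof -
  have "\<exists>x y. x \<noteq> y \<and> x \<in> V \<and> y \<in> V \<and> e = {x, y}" if ee: "e \<in> cmE P" for e
  proof -
    obtain x y A B where h: "A \<in> P" "B \<in> P" "A \<noteq> B" "x \<in> A" "y \<in> B" "e = {x, y}"
      using cmE_edge[OF ee] by blast
    have "x \<noteq> y" using partn_uniq[OF assms h(1,2) h(4)] h(3,5) by blast
    moreover have "x \<in> V" "y \<in> V" using partn_sub[OF assms] h by blast+
    ultimately show ?thesis using h(6) by blast
  qed
  then show ?thesis using assms by (auto simp: simple_graph_def partn_def)
qed

lemma psum_mset: "psum (\<Sum>e\<in>#M. f e) C = (\<Sum>e\<in>#M. psum (f e) C)"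
  by (induction M) (simp_all add: psum_def lookup_add sum.distrib)

lemma psum_edge:
  assumes "partn P V" "e \<in> cmE P" "C \<in> P"
  shows "psum (edge_mon e) C \<le> 1"
proof -
  obtain x y A B where h: "A \<in> P" "B \<in> P" "A \<noteq> B" "x \<in> A" "y \<in> B" "e = {x, y}"
    using cmE_edge[OF assms(2)] by blast
  have fC: "finite C" using partn_fin[OF assms(1,3)] .
  have "psum (edge_mon e) C = (\<Sum>z\<in>C. (if z \<in> e then 1 else 0))"
    unfolding psum_def using h(6) by (intro sum.cong) (simp_all only: lookup_edge_mon finite.emptyI finite_insert)
  also have "\<dots> = card (C \<inter> e)" using fC by (rule sum_indic)
  also have "card (C \<inter> e) \<le> 1"
  proof -
    have "\<not> (x \<in> C \<and> y \<in> C)"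
      using partn_uniq[OF assms(1) assms(3) h(1)] partn_uniq[OF assms(1) assms(3) h(2)] h(3,4,5) by blast
    then have "C \<inter> e \<subseteq> {x} \<or> C \<inter> e \<subseteq> {y}" using h(6) by blast
    then show ?thesis
    proof (elim disjE)
      assume "C \<inter> e \<subseteq> {x}" then show ?thesis using card_mono[of "{x}" "C \<inter> e"] by simp
    next
      assume "C \<inter> e \<subseteq> {y}" then show ?thesis using card_mono[of "{y}" "C \<inter> e"] by simp
    qed
  qed
  finally show ?thesis .
qed

lemma pow_sub_BB:
  assumes "partn P V" "u \<in> pow_gens (cmE P) q"
  shows "u \<in> BB P V q"
proof -
  obtain M where M: "u = (\<Sum>e\<in>#M. edge_mon e)" "size M = q" "set_mset M \<subseteq> cmE P"
    using assms(2) unfolding pow_gens_def by blast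
  have sg: "simple_graph V (cmE P)" using cm_simple[OF assms(1)] .
  have "psum u C \<le> q" if C: "C \<in> P" for C
  proof -
    have "psum u C = (\<Sum>e\<in>#M. psum (edge_mon e) C)" using M(1) psum_mset by simp
    also have "\<dots> \<le> (\<Sum>e\<in>#M. 1)"
      by (rule sum_mset_mono) (use psum_edge[OF assms(1) _ C] M(3) in blast)
    also have "(\<Sum>e\<in>#M. (1::nat)) = size M" by (induction M) auto
    also have "\<dots> = q" using M(2) by simp
    finally show ?thesis .
  qed
  then show ?thesis using pow_gens_props[OF sg assms(2)] by (simp add: BB_def)
qed

lemma sum_pt2:
  assumes "\<And>z. f z + (if z = x then 1 else 0) + (if z = y then 1 else 0) = (g z :: nat)" "finite S"
  shows "sum f S + (if x \<in> S then 1 else 0) + (if y \<in> S then 1 else 0) = sum g S"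
proof -
  have "sum f S + (\<Sum>z\<in>S. (if z = x then 1 else 0)) + (\<Sum>z\<in>S. (if z = y then 1 else 0)) = sum g S"
    using assms(1) by (simp add: sum.distrib[symmetric])
  moreover have "(\<Sum>z\<in>S. (if z = x then 1 else 0)) = (if x \<in> S then 1 else (0::nat))"
    using assms(2) by (simp add: sum.delta)
  moreover have "(\<Sum>z\<in>S. (if z = y then 1 else 0)) = (if y \<in> S then 1 else (0::nat))"
    using assms(2) by (simp add: sum.delta)
  ultimately show ?thesis by simp
qed

lemma BB_sub_pow:
  assumes "partn P V"
  shows "u \<in> BB P V q \<Longrightarrow> u \<in> pow_gens (cmE P) q"
proof (induction q arbitrary: u)
  case 0
  have fin: "finite V" using assms by (simp add: partn_def)
  have "u = 0"
  proof (rule poly_mapping_eqI)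
    fix z
    show "lk u z = lk 0 z"
    proof (cases "z \<in> V")
      case True
      have "(\<Sum>x\<in>V. lk u x) = 0" using 0 by (simp add: BB_def)
      then show ?thesis using True fin by simp
    next
      case False
      then show ?thesis using 0 by (auto simp: BB_def in_keys_iff)
    qed
  qed
  then have "u = (\<Sum>e\<in>#{#}. edge_mon e)" by simp
  then show ?case unfolding pow_gens_def by force
next
  case (Suc q)
  have fin: "finite V" and finP: "finite P" using assms by (simp_all add: partn_def)
  have uB: "ks u \<subseteq> V" "(\<Sum>x\<in>V. lk u x) = 2 * Suc q" "\<And>C. C \<in> P \<Longrightarrow> psum u C \<le> Suc q"
    using Suc.prems by (auto simp: BB_def)
  have tot: "(\<Sum>C\<in>P. psum u C) = 2 * Suc q"
    using sum_partn[OF assms, of "lk u"] uB(2) by (simp add: psum_def)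
  have Pne: "P \<noteq> {}" using tot by auto
  obtain A where A: "A \<in> P" "\<And>C. C \<in> P \<Longrightarrow> psum u C \<le> psum u A"
    using argmax[OF finP Pne, of "psum u"] by blast
  have rest: "(\<Sum>C\<in>P - {A}. psum u C) + psum u A = 2 * Suc q"
    using tot sum.remove[OF finP A(1), of "psum u"] by simp
  have "(\<Sum>C\<in>P - {A}. psum u C) > 0" using rest uB(3)[OF A(1)] by (simp only: mult_Suc_right; linarith)
  then have P2ne: "P - {A} \<noteq> {}" by (metis sum.empty less_irrefl)
  obtain B where B: "B \<in> P - {A}" "\<And>C. C \<in> P - {A} \<Longrightarrow> psum u C \<le> psum u B"
    using argmax[OF _ P2ne, of "psum u"] finP by blast
  have pB: "psum u B > 0"
  proof (rule ccontr)
    assume "\<not> ?thesis"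
    then have "\<forall>C\<in>P - {A}. psum u C = 0" using B(2) by fastforce
    then have "(\<Sum>C\<in>P - {A}. psum u C) = 0" by simp
    then show False using \<open>(\<Sum>C\<in>P - {A}. psum u C) > 0\<close> by simp
  qed
  have pA: "psum u A > 0" using A(2)[of B] B(1) pB by simp
  obtain x where x: "x \<in> A" "lk u x > 0" using psum_pos[OF pA] by blast
  obtain y where y: "y \<in> B" "lk u y > 0" using psum_pos[OF pB] by blast
  have AB: "A \<noteq> B" using B(1) by blast
  have xy: "x \<noteq> y" using partn_uniq[OF assms A(1) _ x(1)] B(1) y(1) AB by blast
  have xV: "x \<in> V" and yV: "y \<in> V" using partn_sub[OF assms] A(1) B(1) x(1) y(1) by blast+
  define u' where "u' = u - sg x 1 - sg y 1"
  have pt: "lk u' z + (if z = x then 1 else 0) + (if z = y then 1 else 0) = lk u z" for z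
    using x(2) y(2) xy by (auto simp: u'_def lookup_minus lookup_single)
  have ueq: "u = edge_mon {x, y} + u'"
  proof (rule poly_mapping_eqI)
    fix z
    show "lk u z = lk (edge_mon {x, y} + u') z"
      using pt[of z] xy by (auto simp: lookup_add lookup_edge_mon)
  qed
  have "u' \<in> BB P V q"
  proof -
    have "ks u' \<subseteq> V"
    proof
      fix z assume "z \<in> ks u'"
      then have "lk u z > 0" using pt[of z] by (simp add: in_keys_iff)
      then show "z \<in> V" using uB(1) by (auto simp: in_keys_iff)
    qed
    moreover have "(\<Sum>z\<in>V. lk u' z) = 2 * q"
      using sum_pt2[OF pt fin] xV yV uB(2) by simp
    moreover have "psum u' C \<le> q" if C: "C \<in> P" for C
    proof -
      have e: "psum u' C + (if x \<in> C then 1 else 0) + (if y \<in> C then 1 else 0) = psum u C"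
        unfolding psum_def by (rule sum_pt2[OF pt partn_fin[OF assms C]])
      show ?thesis
      proof (cases "C = A \<or> C = B")
        case True
        then show ?thesis using e uB(3)[OF C] x(1) y(1) by auto
      next
        case False
        have "psum u C \<le> psum u B" using B(2)[of C] C False by blast
        moreover have "psum u C \<le> psum u A" using A(2)[OF C] .
        moreover have "psum u A + psum u B + psum u C \<le> 2 * Suc q"
        proof -
          have "A \<noteq> C" "B \<noteq> C" "B \<in> P" using False B(1) by auto
          then show ?thesis using psum3[OF assms A(1) _ C AB, of u] uB(2) by simp
        qed
        ultimately have "psum u C \<le> q" by (simp only: mult_Suc_right; linarith)
        then show ?thesis using e by linarith
      qed
    qed
    ultimately show ?thesis by (simp add: BB_def)
  qed
  then obtain M where M: "u' = (\<Sum>e\<in>#M. edge_mon e)" "size M = q" "set_mset M \<subseteq> cmE P"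
    using Suc.IH unfolding pow_gens_def by blast
  have "{x, y} \<in> cmE P" unfolding cmE_def using A(1) B(1) AB x(1) y(1) by blast
  then have "u = (\<Sum>e\<in>#add_mset {x, y} M. edge_mon e) \<and> size (add_mset {x, y} M) = Suc q \<and>
      set_mset (add_mset {x, y} M) \<subseteq> cmE P"
    using M ueq by simp
  then show ?case unfolding pow_gens_def by blast
qed

lemma pow_gens_BB: "partn P V \<Longrightarrow> pow_gens (cmE P) q = BB P V q"
  using pow_sub_BB BB_sub_pow by blast


lemma witness_or_cm:
  assumes sg: "simple_graph V E" and ni: "no_isolated V E" and ne: "V \<noteq> {}"
    and nw: "\<And>x y z. x \<in> V \<Longrightarrow> y \<in> V \<Longrightarrow> z \<in> V \<Longrightarrow> {x, y} \<in> E \<Longrightarrow> {x, z} \<notin> E \<Longrightarrow> {y, z} \<notin> E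
              \<Longrightarrow> z \<noteq> x \<Longrightarrow> z \<noteq> y \<Longrightarrow> False"
  shows "complete_multipartite V E"
proof -
  have fin: "finite V" using sg by (simp add: simple_graph_def)
  define r where "r = {(a, b). a \<in> V \<and> b \<in> V \<and> (a = b \<or> {a, b} \<notin> E)}"
  have eq: "equiv V r"
  proof (rule equivI)
    show "r \<subseteq> V \<times> V" by (auto simp: r_def)
    show "refl_on V r" by (auto simp: r_def refl_on_def)
    show "sym r" by (auto simp: r_def sym_def insert_commute)
    show "trans r"
    proof (rule transI)
      fix a b c assume ab: "(a, b) \<in> r" and bc: "(b, c) \<in> r"
      show "(a, c) \<in> r"
      proof (cases "a = c \<or> a = b \<or> b = c")
        case True then show ?thesis using ab bc by (auto simp: r_def)
      next
        case False
        then have "{a, b} \<notin> E" "{b, c} \<notin> E" "a \<in> V" "b \<in> V" "c \<in> V" using ab bc by (auto simp: r_def)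
        moreover have "{a, c} \<notin> E"
        proof
          assume "{a, c} \<in> E"
          show False
            by (rule nw[of a c b]) (use False \<open>{a, c} \<in> E\<close> \<open>{a, b} \<notin> E\<close> \<open>{b, c} \<notin> E\<close> \<open>a \<in> V\<close> \<open>b \<in> V\<close> \<open>c \<in> V\<close> in \<open>auto simp: insert_commute\<close>)
        qed
        ultimately show ?thesis by (auto simp: r_def)
      qed
    qed
  qed
  define P where "P = V // r"
  have cls: "X = r `` {x}" if XP: "X \<in> P" and xX: "x \<in> X" for X x
  proof -
    obtain a where a: "X = r `` {a}" "a \<in> V" using XP unfolding P_def by (rule quotientE)
    then have "(a, x) \<in> r" using xX by simp
    then show ?thesis using a equiv_class_eq[OF eq] by simp
  qed
  have inr: "(x, y) \<in> r \<longleftrightarrow> y \<in> r `` {x}" for x y by simp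
  have "finite P" unfolding P_def by (rule finite_quotient[OF fin]) (auto simp: r_def)
  moreover have "{} \<notin> P" using in_quotient_imp_non_empty[OF eq] unfolding P_def by blast
  moreover have "\<Union>P = V" using Union_quotient[OF eq] unfolding P_def .
  moreover have disj: "\<forall>A\<in>P. \<forall>B\<in>P. A \<noteq> B \<longrightarrow> A \<inter> B = {}" using quotient_disj[OF eq] unfolding P_def by blast
  moreover have "card P \<ge> 2"
  proof -
    obtain x where "x \<in> V" using ne by blast
    then obtain e where "e \<in> E" "x \<in> e" using ni by (auto simp: no_isolated_def)
    then obtain a b where ab: "a \<noteq> b" "a \<in> V" "b \<in> V" "e = {a, b}" using sg by (auto simp: simple_graph_def)
    have "r `` {a} \<in> P" "r `` {b} \<in> P" using ab unfolding P_def by (auto intro: quotientI)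
    moreover have "b \<notin> r `` {a}" using ab \<open>e \<in> E\<close> by (auto simp: r_def)
    moreover have "b \<in> r `` {b}" using ab by (auto simp: r_def)
    ultimately have "{r `` {a}, r `` {b}} \<subseteq> P" "r `` {a} \<noteq> r `` {b}" by blast+
    then have "{r `` {a}, r `` {b}} \<subseteq> P" "card {r `` {a}, r `` {b}} = 2" by simp_all
    then show ?thesis using card_mono[OF \<open>finite P\<close>] by metis
  qed
  moreover have "E = {{x, y} | x y. \<exists>A\<in>P. \<exists>B\<in>P. A \<noteq> B \<and> x \<in> A \<and> y \<in> B}"
  proof
    show "E \<subseteq> {{x, y} | x y. \<exists>A\<in>P. \<exists>B\<in>P. A \<noteq> B \<and> x \<in> A \<and> y \<in> B}"
    proof
      fix e assume "e \<in> E"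
      then obtain a b where ab: "a \<noteq> b" "a \<in> V" "b \<in> V" "e = {a, b}" using sg by (auto simp: simple_graph_def)
      have "r `` {a} \<in> P" "r `` {b} \<in> P" using ab unfolding P_def by (auto intro: quotientI)
      moreover have "b \<notin> r `` {a}" using ab \<open>e \<in> E\<close> by (auto simp: r_def)
      moreover have "b \<in> r `` {b}" "a \<in> r `` {a}" using ab by (auto simp: r_def)
      moreover have "r `` {a} \<noteq> r `` {b}"
      proof
        assume "r `` {a} = r `` {b}"
        then show False using \<open>b \<notin> r `` {a}\<close> \<open>b \<in> r `` {b}\<close> by simp
      qed
      ultimately have "\<exists>A\<in>P. \<exists>B\<in>P. A \<noteq> B \<and> a \<in> A \<and> b \<in> B"
        by (intro bexI[of _ "r `` {a}"] bexI[of _ "r `` {b}"]) simp_all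
      then show "e \<in> {{x, y} | x y. \<exists>A\<in>P. \<exists>B\<in>P. A \<noteq> B \<and> x \<in> A \<and> y \<in> B}"
        unfolding mem_Collect_eq using ab(4) by (intro exI[of _ a] exI[of _ b]) simp
    qed
    show "{{x, y} | x y. \<exists>A\<in>P. \<exists>B\<in>P. A \<noteq> B \<and> x \<in> A \<and> y \<in> B} \<subseteq> E"
    proof
      fix e assume "e \<in> {{x, y} | x y. \<exists>A\<in>P. \<exists>B\<in>P. A \<noteq> B \<and> x \<in> A \<and> y \<in> B}"
      then obtain x y A B where h: "A \<in> P" "B \<in> P" "A \<noteq> B" "x \<in> A" "y \<in> B" "e = {x, y}" by blast
      have "(x, y) \<notin> r"
      proof
        assume "(x, y) \<in> r"
        then have "y \<in> A" using cls[OF h(1,4)] by simp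
        then show False using disj h by blast
      qed
      moreover have "x \<in> V" "y \<in> V" using h \<open>\<Union>P = V\<close> by blast+
      ultimately show "e \<in> E" using h(6) by (auto simp: r_def)
    qed
  qed
  ultimately show ?thesis unfolding complete_multipartite_def by blast
qed

lemma lk_rep: "lk (\<Sum>e\<in>#replicate_mset n a. f e) t = n * lk (f a) t"
  by (induction n) (auto simp: lookup_add)

lemma lk_rep2: "lk (sum_mset (replicate_mset n a)) t = n * lk a t"
  by (induction n) (auto simp: lookup_add)

lemma pow_nbr:
  assumes sg: "simple_graph V E" and u: "u \<in> pow_gens E q" and z: "lk u z \<ge> 1"
  shows "\<exists>t. {z, t} \<in> E \<and> t \<noteq> z \<and> lk u t \<ge> 1"
proof -
  obtain M where M: "u = (\<Sum>e\<in>#M. edge_mon e)" "set_mset M \<subseteq> E"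
    using u unfolding pow_gens_def by blast
  have fe: "finite e" if "e \<in># M" for e
    using sg M(2) that by (force simp: simple_graph_def)
  have "\<exists>e\<in>#M. z \<in> e"
  proof (rule ccontr)
    assume "\<not> ?thesis"
    then have "\<forall>e\<in>#M. lk (edge_mon e) z = 0" using fe by (auto simp: lookup_edge_mon)
    then have "lk u z = 0" using M(1) by (simp add: lk_sum_mset)
    then show False using z by simp
  qed
  then obtain e where e: "e \<in># M" "z \<in> e" by blast
  obtain a b where ab: "a \<noteq> b" "e = {a, b}" using sg M(2) e(1) by (force simp: simple_graph_def)
  obtain t where t: "e = {z, t}" "t \<noteq> z" using ab e(2) by blast
  have "u = edge_mon e + (\<Sum>e\<in>#M - {#e#}. edge_mon e)"
    using M(1) e(1) by (metis insert_DiffM sum_mset.insert image_mset_add_mset)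
  then have "lk u t \<ge> lk (edge_mon e) t" by (simp add: lookup_add)
  moreover have "lk (edge_mon e) t = 1" using t by (simp add: lookup_edge_mon)
  ultimately show ?thesis using t e(1) M(2) by auto
qed

lemma witness_not_poly:
  assumes sg: "simple_graph V E" and ni: "no_isolated V E" and q: "q \<ge> 1"
    and w: "x \<in> V" "y \<in> V" "z \<in> V" "{x, y} \<in> E" "{x, z} \<notin> E" "{y, z} \<notin> E" "z \<noteq> x" "z \<noteq> y"
  shows "\<not> polymatroid (min_gens E q)"
proof
  assume pm: "polymatroid (min_gens E q)"
  have mg: "min_gens E q = pow_gens E q" using min_gens_eq[OF sg] .
  obtain e where "e \<in> E" "z \<in> e" using ni w(3) by (auto simp: no_isolated_def)
  then obtain a b where "a \<noteq> b" "e = {a, b}" using sg by (force simp: simple_graph_def)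
  then obtain w' where zw: "{z, w'} \<in> E" "w' \<noteq> z" using \<open>e \<in> E\<close> \<open>z \<in> e\<close> by (metis insert_commute insertE singletonD)
  have wx: "w' \<noteq> x" using zw w(5) by (auto simp: insert_commute)
  have wy: "w' \<noteq> y" using zw w(6) by (auto simp: insert_commute)
  have xy: "x \<noteq> y" using w(4) sg by (force simp: simple_graph_def)
  define Mu where "Mu = add_mset {z, w'} (replicate_mset (q - 1) {x, y})"
  define Mv where "Mv = replicate_mset q {x, y}"
  define u where "u = (\<Sum>e\<in>#Mu. edge_mon e)"
  define v where "v = (\<Sum>e\<in>#Mv. edge_mon e)"
  have "size Mu = q \<and> set_mset Mu \<subseteq> E" using zw w(4) q by (auto simp: Mu_def)
  then have uP: "u \<in> pow_gens E q" unfolding pow_gens_def mem_Collect_eq u_def by blast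
  have "size Mv = q \<and> set_mset Mv \<subseteq> E" using w(4) by (auto simp: Mv_def)
  then have vP: "v \<in> pow_gens E q" unfolding pow_gens_def mem_Collect_eq v_def by blast
  have lu: "lk u t = (if t \<in> {z, w'} then 1 else 0) + (q - 1) * (if t \<in> {x, y} then 1 else 0)" for t
    by (simp add: u_def Mu_def lookup_add lk_rep lk_rep2 lookup_edge_mon del: insert_iff)
  have lv: "lk v t = q * (if t \<in> {x, y} then 1 else 0)" for t
    by (simp add: v_def Mv_def lk_rep lk_rep2 lookup_edge_mon del: insert_iff)
  have "lk u w' > lk v w'" using lu lv wx wy by simp
  then obtain \<rho> where r: "lk u \<rho> < lk v \<rho>" "sw u w' \<rho> \<in> pow_gens E q"
    using pm uP vP unfolding polymatroid_def mg sw_def by blast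
  have rxy: "\<rho> \<in> {x, y}" using r(1) lv[of \<rho>] by (auto split: if_splits)
  have "lk (sw u w' \<rho>) z \<ge> 1" using lu[of z] rxy zw(2) w(7,8) by (auto simp: lookup_sw)
  then obtain t where t: "{z, t} \<in> E" "t \<noteq> z" "lk (sw u w' \<rho>) t \<ge> 1" using pow_nbr[OF sg r(2)] by blast
  have "t \<noteq> x" using t(1) w(5) by (auto simp: insert_commute)
  moreover have "t \<noteq> y" using t(1) w(6) by (auto simp: insert_commute)
  moreover have "t \<noteq> w'"
  proof
    assume "t = w'"
    then have "lk (sw u w' \<rho>) t = 0" using lu[of w'] rxy wx wy zw(2) by (auto simp: lookup_sw)
    then show False using t(3) by simp
  qed
  ultimately have "lk (sw u w' \<rho>) t = 0" using lu[of t] rxy t(2) by (auto simp: lookup_sw)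
  then show False using t(3) by simp
qed

lemma poly_imp_cm:
  assumes sg: "simple_graph V E" and ni: "no_isolated V E" and ne: "V \<noteq> {}"
    and q: "q \<ge> 1" and pm: "polymatroid (min_gens E q)"
  shows "complete_multipartite V E"
  using witness_or_cm[OF sg ni ne] witness_not_poly[OF sg ni q] pm by blast

lemma cm_imp_poly:
  assumes sg: "simple_graph V E" and cm: "complete_multipartite V E"
  shows "polymatroid (min_gens E q)"
proof -
  obtain P where P: "finite P" "{} \<notin> P" "\<Union>P = V" "\<forall>A\<in>P. \<forall>B\<in>P. A \<noteq> B \<longrightarrow> A \<inter> B = {}"
     "E = cmE P"
    using cm unfolding complete_multipartite_def cmE_def by blast
  have fin: "finite V" using sg by (simp add: simple_graph_def)
  have pt: "partn P V" using P fin by (simp add: partn_def)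
  have B: "min_gens E q = BB P V q" using min_gens_eq[OF sg] pow_gens_BB[OF pt] P(5) by simp
  have "finite (min_gens E q)" using min_gens_eq[OF sg] finite_pow_gens[OF sg] by simp
  moreover have "\<forall>u\<in>min_gens E q. \<forall>v\<in>min_gens E q. mdeg u = mdeg v"
    using B fin by (auto simp: BB_def mdeg_V)
  moreover have "\<forall>u\<in>min_gens E q. \<forall>v\<in>min_gens E q. \<forall>\<xi>. lk u \<xi> > lk v \<xi> \<longrightarrow>
        (\<exists>\<rho>. lk u \<rho> < lk v \<rho> \<and> u - sg \<xi> 1 + sg \<rho> 1 \<in> min_gens E q)"
    using BB_exchange[OF pt] unfolding B sw_def by blast
  ultimately show ?thesis unfolding polymatroid_def by blast
qed


lemma lk_summ: "lk (sum_mset M) x = (\<Sum>u\<in>#M. lk u x)"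
  by (induction M) (auto simp: lookup_add)

lemma psum_summ: "psum (sum_mset M) C = (\<Sum>u\<in>#M. psum u C)"
  by (induction M) (auto simp: psum_def lookup_add sum.distrib)

lemma sw_sum: "lk u a \<ge> 1 \<Longrightarrow> lk v b \<ge> 1 \<Longrightarrow> sw u a b + sw v b a = u + v"
  by (rule poly_mapping_eqI) (auto simp: lookup_add lookup_sw)

lemma sw_sw2: "lk v b \<ge> 1 \<Longrightarrow> lk v c \<ge> 1 \<Longrightarrow> b \<noteq> a \<Longrightarrow> c \<noteq> a \<Longrightarrow> c \<noteq> b \<Longrightarrow> sw (sw v b a) c b = sw v c a"
  by (rule poly_mapping_eqI) (auto simp: lookup_sw)

lemma BB_V: "u \<in> BB P V q \<Longrightarrow> lk u x \<ge> 1 \<Longrightarrow> x \<in> V"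
  by (auto simp: BB_def in_keys_iff)

lemma BB_psum: "u \<in> BB P V q \<Longrightarrow> C \<in> P \<Longrightarrow> psum u C \<le> q"
  by (auto simp: BB_def)

lemma BB_tot: "u \<in> BB P V q \<Longrightarrow> (\<Sum>x\<in>V. lk u x) = 2 * q"
  by (auto simp: BB_def)

lemma sum_lt_part:
  assumes "finite A" "\<forall>x\<in>A. lk v x \<le> lk u x" "a \<in> A" "lk v a + k \<le> lk u a"
  shows "psum v A + k \<le> psum u A"
proof -
  have "psum v A = lk v a + (\<Sum>x\<in>A - {a}. lk v x)"
    unfolding psum_def using sum.remove[OF assms(1,3)] by simp
  moreover have "psum u A = lk u a + (\<Sum>x\<in>A - {a}. lk u x)"
    unfolding psum_def using sum.remove[OF assms(1,3)] by simp
  moreover have "(\<Sum>x\<in>A - {a}. lk v x) \<le> (\<Sum>x\<in>A - {a}. lk u x)"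
    using assms(2) by (intro sum_mono) auto
  ultimately show ?thesis using assms(4) by linarith
qed

definition dd :: "'a set \<Rightarrow> ('a \<Rightarrow>\<^sub>0 nat) \<Rightarrow> ('a \<Rightarrow>\<^sub>0 nat) \<Rightarrow> nat" where
  "dd V u w = (\<Sum>x\<in>V. (lk u x - lk w x) + (lk w x - lk u x))"

lemma dd_dec:
  assumes "finite V" "\<xi> \<in> V" "lk u \<xi> > lk w \<xi>" "lk u \<rho> < lk w \<rho>"
  shows "dd V (sw u \<xi> \<rho>) w < dd V u w"
  unfolding dd_def
proof (rule sum_strict_mono_ex1[OF assms(1)])
  have ne: "\<xi> \<noteq> \<rho>" using assms(3,4) by auto
  show "\<forall>x\<in>V. lk (sw u \<xi> \<rho>) x - lk w x + (lk w x - lk (sw u \<xi> \<rho>) x) \<le> lk u x - lk w x + (lk w x - lk u x)"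
    using assms(3,4) ne by (auto simp: lookup_sw)
  show "\<exists>x\<in>V. lk (sw u \<xi> \<rho>) x - lk w x + (lk w x - lk (sw u \<xi> \<rho>) x) < lk u x - lk w x + (lk w x - lk u x)"
    using assms(2,3) ne by (intro bexI[of _ \<xi>]) (auto simp: lookup_sw)
qed

lemma exists_less:
  assumes "partn P V" "u \<in> BB P V q" "w \<in> BB P V q" "u \<noteq> w"
  shows "\<exists>\<rho>. lk u \<rho> < lk w \<rho>"
proof (rule ccontr)
  assume "\<not> ?thesis"
  then have "\<forall>x. lk w x \<le> lk u x" by (simp add: not_less)
  then have "w = u" using assms by (intro eq_by_sum[of V]) (auto simp: BB_def partn_def)
  then show False using assms(4) by simp
qed

lemma summ_pos: "lk (sum_mset (Z :: ('a \<Rightarrow>\<^sub>0 nat) multiset)) x \<ge> 1 \<Longrightarrow> \<exists>v\<in>#Z. lk v x \<ge> 1"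
proof (induction Z)
  case empty
  then show ?case by simp
next
  case (add a Z)
  show ?case
  proof (cases "lk a x \<ge> 1")
    case True then show ?thesis by simp
  next
    case False
    then have "lk (sum_mset Z) x \<ge> 1" using add.prems by (simp add: lookup_add)
    then show ?thesis using add.IH by auto
  qed
qed

lemma tot_summ: "set_mset M \<subseteq> BB P V q \<Longrightarrow> (\<Sum>x\<in>V. lk (sum_mset M) x) = 2 * q * size M"
  by (induction M) (auto simp: lookup_add sum.distrib BB_def)

lemma psum_summ_le: "set_mset M \<subseteq> BB P V q \<Longrightarrow> C \<in> P \<Longrightarrow> psum (sum_mset M) C \<le> q * size M"
  by (induction M) (auto simp: psum_def lookup_add sum.distrib BB_def)

lemma summ_ge: "(\<And>x. x \<in># M \<Longrightarrow> f x \<ge> (k::nat)) \<Longrightarrow> (\<Sum>x\<in>#M. f x) \<ge> k * size M"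
  by (induction M) (auto simp: add_mono)

context
  fixes P :: "'a set set" and V :: "'a set" and q :: nat
    and R :: "('a \<Rightarrow>\<^sub>0 nat) multiset \<Rightarrow> ('a \<Rightarrow>\<^sub>0 nat) multiset \<Rightarrow> bool"
  assumes pt: "partn P V" and q1: "q \<ge> 1"
    and Rrefl: "\<And>X. R X X" and Rsym: "\<And>X Y. R X Y \<Longrightarrow> R Y X"
    and Rtrans: "\<And>X Y Z. R X Y \<Longrightarrow> R Y Z \<Longrightarrow> R X Z"
    and Radd: "\<And>X Y Z. R X Y \<Longrightarrow> set_mset Z \<subseteq> BB P V q \<Longrightarrow> R (X + Z) (Y + Z)"
    and Rex: "\<And>u v \<xi> \<rho>. u \<in> BB P V q \<Longrightarrow> v \<in> BB P V q \<Longrightarrow> lk u \<xi> > lk v \<xi> \<Longrightarrow> lk u \<rho> < lk v \<rho>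
       \<Longrightarrow> sw u \<xi> \<rho> \<in> BB P V q \<Longrightarrow> sw v \<rho> \<xi> \<in> BB P V q \<Longrightarrow> R {#u, v#} {#sw u \<xi> \<rho>, sw v \<rho> \<xi>#}"
begin

lemma bad1:
  assumes u: "u \<in> BB P V q" and v: "v \<in> BB P V q" and ab: "a \<noteq> b" and vb: "lk v b \<ge> 1"
    and ua: "lk u a \<ge> lk v a + 2" and ub: "lk u b \<ge> lk v b"
    and u': "sw u a b \<in> BB P V q" and v': "sw v b a \<in> BB P V q"
  shows "R {#u, v#} {#sw u a b, sw v b a#}"
proof -
  have ua1: "lk u a \<ge> 1" using ua by simp
  have aV: "a \<in> V" using BB_V[OF u ua1] .
  obtain A where A: "A \<in> P" "a \<in> A" using partn_part[OF pt aV] by blast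
  have "\<exists>c. lk u c < lk v c \<and> sw u a c \<in> BB P V q \<and> sw v c a \<in> BB P V q"
  proof (cases "\<exists>c\<in>A. lk u c < lk v c")
    case True
    then obtain c where c: "c \<in> A" "lk u c < lk v c" by blast
    have vc: "lk v c \<ge> 1" using c(2) by simp
    have cV: "c \<in> V" using BB_V[OF v vc] .
    have "sw u a c \<in> BB P V q"
      by (rule sw_BB[OF pt u ua1 cV]) (use partn_uniq[OF pt _ A(1) _ c(1)] A(2) in blast)
    moreover have "sw v c a \<in> BB P V q"
      by (rule sw_BB[OF pt v vc aV]) (use partn_uniq[OF pt _ A(1) _ A(2)] c(1) in blast)
    ultimately show ?thesis using c(2) by blast
  next
    case False
    have "psum v A + 2 \<le> psum u A"
      by (rule sum_lt_part[OF partn_fin[OF pt A(1)] _ A(2)]) (use False ua in auto)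
    then have vA: "psum v A < q" using BB_psum[OF u A(1)] by linarith
    have "lk u a > lk v a" using ua by simp
    from find_rho[OF pt u v this] obtain c where
      c: "lk u c < lk v c" "\<forall>C\<in>P. c \<in> C \<longrightarrow> a \<notin> C \<longrightarrow> psum u C < q"
      by blast
    have vc: "lk v c \<ge> 1" using c(1) by simp
    have cV: "c \<in> V" using BB_V[OF v vc] .
    have "sw u a c \<in> BB P V q"
      by (rule sw_BB[OF pt u ua1 cV]) (use c(2) in blast)
    moreover have "sw v c a \<in> BB P V q"
      by (rule sw_BB[OF pt v vc aV]) (use partn_uniq[OF pt _ A(1) _ A(2)] vA in blast)
    ultimately show ?thesis using c(1) by blast
  qed
  then obtain c where c: "lk u c < lk v c" "sw u a c \<in> BB P V q" "sw v c a \<in> BB P V q" by blast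
  have ca: "c \<noteq> a" using c(1) ua by auto
  have cb: "c \<noteq> b" using c(1) ub by auto
  have vc: "lk v c \<ge> 1" using c(1) by simp
  have s1: "R {#u, v#} {#sw u a c, sw v c a#}"
    by (rule Rex[OF u v _ c(1) c(2,3)]) (use ua in simp)
  have l1: "lk (sw u a b) b > lk (sw v b a) b" using ab ub vb by (auto simp: lookup_sw)
  have l2: "lk (sw u a b) c < lk (sw v b a) c" using ca cb c(1) by (auto simp: lookup_sw)
  have e1: "sw (sw u a b) b c = sw u a c" by (rule sw_sw) (use ua1 in \<open>auto simp: lookup_sw\<close>)
  have e2: "sw (sw v b a) c b = sw v c a" by (rule sw_sw2[OF vb vc ab[symmetric] ca cb])
  have s2: "R {#sw u a b, sw v b a#} {#sw u a c, sw v c a#}"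
    using Rex[OF u' v' l1 l2] e1 e2 c(2,3) by simp
  show ?thesis using Rtrans[OF s1 Rsym[OF s2]] .
qed

lemma swapR:
  assumes u: "u \<in> BB P V q" and v: "v \<in> BB P V q" and ab: "a \<noteq> b" and ua: "lk u a \<ge> 1" and vb: "lk v b \<ge> 1"
    and u': "sw u a b \<in> BB P V q" and v': "sw v b a \<in> BB P V q"
  shows "R {#u, v#} {#sw u a b, sw v b a#}"
proof -
  consider (F) "lk u a > lk v a \<and> lk u b < lk v b" | (Rv) "lk u a \<le> lk v a + 1 \<and> lk u b + 1 \<ge> lk v b"
    | (B1) "lk u a \<ge> lk v a + 2 \<and> lk u b \<ge> lk v b" | (B2) "lk u a \<le> lk v a \<and> lk u b + 2 \<le> lk v b"
    by linarith
  then show ?thesis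
  proof cases
    case F
    then show ?thesis using Rex[OF u v _ _ u' v'] by blast
  next
    case Rv
    have l1: "lk (sw u a b) b > lk (sw v b a) b" using ab Rv vb by (auto simp: lookup_sw)
    have l2: "lk (sw u a b) a < lk (sw v b a) a" using ab Rv ua by (auto simp: lookup_sw)
    have e1: "sw (sw u a b) b a = u" using sw_back[OF ua] .
    have e2: "sw (sw v b a) a b = v" using sw_back[OF vb] .
    have "R {#sw u a b, sw v b a#} {#u, v#}"
      using Rex[OF u' v' l1 l2] e1 e2 u v by simp
    then show ?thesis by (rule Rsym)
  next
    case B1
    then show ?thesis using bad1[OF u v ab vb _ _ u' v'] by simp
  next
    case B2
    have "R {#v, u#} {#sw v b a, sw u a b#}"
      using bad1[OF v u ab[symmetric] ua _ _ v' u'] B2 by simp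
    then show ?thesis by (simp add: add_mset_commute)
  qed
qed

lemma msw:
  assumes u: "u \<in> BB P V q" and v: "v \<in> BB P V q" and ab: "a \<noteq> b" and ua: "lk u a \<ge> 1" and vb: "lk v b \<ge> 1"
    and u': "sw u a b \<in> BB P V q" and v': "sw v b a \<in> BB P V q" and Z: "set_mset Z \<subseteq> BB P V q"
  shows "R (add_mset u (add_mset v Z)) (add_mset (sw u a b) (add_mset (sw v b a) Z))"
    "sum_mset (add_mset (sw u a b) (add_mset (sw v b a) Z)) = sum_mset (add_mset u (add_mset v Z))"
    "set_mset (add_mset (sw u a b) (add_mset (sw v b a) Z)) \<subseteq> BB P V q"
    "size (add_mset (sw u a b) (add_mset (sw v b a) Z)) = size (add_mset u (add_mset v Z))"
proof -
  show "R (add_mset u (add_mset v Z)) (add_mset (sw u a b) (add_mset (sw v b a) Z))"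
    using Radd[OF swapR[OF u v ab ua vb u' v'] Z] by simp
  show "sum_mset (add_mset (sw u a b) (add_mset (sw v b a) Z)) = sum_mset (add_mset u (add_mset v Z))"
    using sw_sum[OF ua vb] by (simp add: add.assoc[symmetric])
  show "set_mset (add_mset (sw u a b) (add_mset (sw v b a) Z)) \<subseteq> BB P V q" using u' v' Z by simp
  show "size (add_mset (sw u a b) (add_mset (sw v b a) Z)) = size (add_mset u (add_mset v Z))" by simp
qed

lemma improve:
  assumes X: "set_mset X \<subseteq> BB P V q" "u \<in># X" and w: "w \<in> BB P V q" "u \<noteq> w"
    and Y: "set_mset Y \<subseteq> BB P V q" "sum_mset X = w + sum_mset Y" "size X = Suc (size Y)"
  shows "\<exists>X1 u1. R X X1 \<and> set_mset X1 \<subseteq> BB P V q \<and> size X1 = size X \<and> sum_mset X1 = sum_mset X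
     \<and> u1 \<in># X1 \<and> dd V u1 w < dd V u w"
proof -
  have fin: "finite V" using pt by (simp add: partn_def)
  define Z where "Z = X - {#u#}"
  have XZ: "X = add_mset u Z" using X(2) by (simp add: Z_def)
  have uB: "u \<in> BB P V q" using X by blast
  have ZB: "set_mset Z \<subseteq> BB P V q" using X(1) XZ by auto
  have sZ: "size Z = size Y" using Y(3) XZ by simp
  obtain \<rho> where r: "lk u \<rho> < lk w \<rho>" using exists_less[OF pt uB w] by blast
  have w1: "lk w \<rho> \<ge> 1" using r by simp
  have rV: "\<rho> \<in> V" using BB_V[OF w(1) w1] .
  obtain A where A: "A \<in> P" "\<rho> \<in> A" using partn_part[OF pt rV] by blast
  have "lk (sum_mset X) \<rho> = lk u \<rho> + lk (sum_mset Z) \<rho>" using XZ by (simp add: lookup_add)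
  moreover have "lk (sum_mset X) \<rho> = lk w \<rho> + lk (sum_mset Y) \<rho>" using Y(2) by (simp add: lookup_add)
  ultimately have Zr: "lk (sum_mset Z) \<rho> \<ge> 1" using r by linarith
  obtain v where v: "v \<in># Z" "lk v \<rho> \<ge> 1" using summ_pos[OF Zr] by blast
  define Z1 where "Z1 = Z - {#v#}"
  have ZZ1: "Z = add_mset v Z1" using v(1) by (simp add: Z1_def)
  have vB: "v \<in> BB P V q" using ZB v(1) by blast
  have Z1B: "set_mset Z1 \<subseteq> BB P V q" using ZB ZZ1 by auto
  show ?thesis
  proof (cases "\<exists>\<xi>\<in>A. lk u \<xi> > lk w \<xi>")
    case True
    then obtain \<xi> where xi: "\<xi> \<in> A" "lk u \<xi> > lk w \<xi>" by blast
    have xr: "\<xi> \<noteq> \<rho>" using xi r by auto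
    have u1: "lk u \<xi> \<ge> 1" using xi by simp
    have xV: "\<xi> \<in> V" using BB_V[OF uB u1] .
    have u': "sw u \<xi> \<rho> \<in> BB P V q"
      by (rule sw_BB[OF pt uB u1 rV]) (use partn_uniq[OF pt _ A(1) _ A(2)] xi(1) in blast)
    have v': "sw v \<rho> \<xi> \<in> BB P V q"
      by (rule sw_BB[OF pt vB v(2) xV]) (use partn_uniq[OF pt _ A(1) _ xi(1)] A(2) in blast)
    note m = msw[OF uB vB xr u1 v(2) u' v' Z1B]
    show ?thesis
      using m dd_dec[OF fin xV xi(2) r] XZ ZZ1 by (intro exI[of _ "add_mset (sw u \<xi> \<rho>) (add_mset (sw v \<rho> \<xi>) Z1)"] exI[of _ "sw u \<xi> \<rho>"]) simp
  next
    case False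
    have "psum u A + 1 \<le> psum w A"
      by (rule sum_lt_part[OF partn_fin[OF pt A(1)] _ A(2)]) (use False r in auto)
    then have uA: "psum u A < q" using BB_psum[OF w(1) A(1)] by linarith
    have "\<exists>C\<in>P - {A}. psum u C > psum w C"
    proof (rule ccontr)
      assume "\<not> ?thesis"
      then have le: "\<forall>C\<in>P - {A}. psum u C \<le> psum w C" by (simp add: not_less)
      have finP: "finite P" using pt by (simp add: partn_def)
      have "(\<Sum>C\<in>P. psum u C) = psum u A + (\<Sum>C\<in>P - {A}. psum u C)" using sum.remove[OF finP A(1)] by simp
      moreover have "(\<Sum>C\<in>P. psum w C) = psum w A + (\<Sum>C\<in>P - {A}. psum w C)" using sum.remove[OF finP A(1)] by simp
      moreover have "(\<Sum>C\<in>P - {A}. psum u C) \<le> (\<Sum>C\<in>P - {A}. psum w C)" using le by (intro sum_mono) auto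
      moreover have "(\<Sum>C\<in>P. psum u C) = (\<Sum>C\<in>P. psum w C)"
        using sum_partn[OF pt, of "lk u"] sum_partn[OF pt, of "lk w"] BB_tot[OF uB] BB_tot[OF w(1)]
        by (simp add: psum_def)
      ultimately show False using \<open>psum u A + 1 \<le> psum w A\<close> by linarith
    qed
    then obtain C where C: "C \<in> P" "C \<noteq> A" "psum u C > psum w C" by blast
    have "\<exists>\<xi>\<in>C. lk u \<xi> > lk w \<xi>"
    proof (rule ccontr)
      assume "\<not> ?thesis"
      then have "psum u C \<le> psum w C" unfolding psum_def by (intro sum_mono) (simp add: not_less)
      then show False using C(3) by simp
    qed
    then obtain \<xi> where xi: "\<xi> \<in> C" "lk u \<xi> > lk w \<xi>" by blast
    have xr: "\<xi> \<noteq> \<rho>" using xi(1) A C(1,2) partn_uniq[OF pt] by blast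
    have u1: "lk u \<xi> \<ge> 1" using xi by simp
    have xV: "\<xi> \<in> V" using BB_V[OF uB u1] .
    have u': "sw u \<xi> \<rho> \<in> BB P V q"
      by (rule sw_BB[OF pt uB u1 rV]) (use partn_uniq[OF pt _ A(1) _ A(2)] uA in blast)
    have dec: "dd V (sw u \<xi> \<rho>) w < dd V u w" using dd_dec[OF fin xV xi(2) r] .
    have "psum (sum_mset X) C = psum u C + (\<Sum>v'\<in>#Z. psum v' C)" using psum_summ[of "add_mset u Z" C] XZ by simp
    moreover have "psum (sum_mset X) C = psum w C + psum (sum_mset Y) C" using Y(2) by (simp add: psum_def lookup_add sum.distrib)
    moreover have "psum (sum_mset Y) C \<le> q * size Z" using psum_summ_le[OF Y(1) C(1)] sZ by simp
    ultimately have SumZ: "(\<Sum>v'\<in>#Z. psum v' C) + 1 \<le> q * size Z" using C(3) by linarith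
    show ?thesis
    proof (cases "psum v C < q")
      case True
      have v': "sw v \<rho> \<xi> \<in> BB P V q"
        by (rule sw_BB[OF pt vB v(2) xV]) (use partn_uniq[OF pt _ C(1) _ xi(1)] True in blast)
      note m = msw[OF uB vB xr u1 v(2) u' v' Z1B]
      show ?thesis
        using m dec XZ ZZ1 by (intro exI[of _ "add_mset (sw u \<xi> \<rho>) (add_mset (sw v \<rho> \<xi>) Z1)"] exI[of _ "sw u \<xi> \<rho>"]) simp
    next
      case False
      then have vC: "psum v C = q" using BB_psum[OF vB C(1)] by simp
      have "\<exists>k\<in>#Z1. psum k C < q"
      proof (rule ccontr)
        assume "\<not> ?thesis"
        then have "(\<Sum>k\<in>#Z1. psum k C) \<ge> q * size Z1" by (intro summ_ge) (simp add: not_less)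
        then show False using SumZ ZZ1 vC by simp
      qed
      then obtain k where k: "k \<in># Z1" "psum k C < q" by blast
      define Z2 where "Z2 = Z1 - {#k#}"
      have Z12: "Z1 = add_mset k Z2" using k(1) by (simp add: Z2_def)
      have kB: "k \<in> BB P V q" using Z1B k(1) by blast
      have Z2B: "set_mset Z2 \<subseteq> BB P V q" using Z1B Z12 by auto
      obtain c where c: "c \<in> C" "lk v c > 0" using psum_pos[of v C] vC q1 by auto
      have cr: "c \<noteq> \<rho>" using c(1) A C(1,2) partn_uniq[OF pt] by blast
      have fC: "finite C" using partn_fin[OF pt C(1)] .
      have CV: "C \<subseteq> V" using partn_sub[OF pt C(1)] .
      have totk: "(\<Sum>x\<in>V. lk k x) = psum k C + (\<Sum>x\<in>V - C. lk k x)"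
        using sum.subset_diff[OF CV fin, of "lk k"] unfolding psum_def by linarith
      have "\<exists>y\<in>V - C. lk k y > 0 \<and> (\<forall>C'\<in>P. y \<in> C' \<longrightarrow> c \<notin> C' \<longrightarrow> psum v C' < q)"
      proof -
        have "(\<Sum>x\<in>V - C. lk k x) > 0" using totk BB_tot[OF kB] k(2) by linarith
        then obtain y0 where y0: "y0 \<in> V - C" "lk k y0 > 0" using psum_pos[of k "V - C"] by (auto simp: psum_def)
        obtain D where D: "D \<in> P" "y0 \<in> D" using partn_part[OF pt] y0(1) by blast
        have DC: "D \<noteq> C" using D y0(1) by blast
        show ?thesis
        proof (cases "psum v D < q")
          case True
          then show ?thesis using y0 D partn_uniq[OF pt _ D(1) _ D(2)] by blast
        next
          case False
          then have vD: "psum v D = q" using BB_psum[OF vB D(1)] by simp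
          have DV: "D \<subseteq> V" using partn_sub[OF pt D(1)] .
          have fD: "finite D" using partn_fin[OF pt D(1)] .
          have CD: "C \<inter> D = {}" using pt C(1) D(1) DC by (auto simp: partn_def)
          have "(\<Sum>x\<in>V. lk k x) = (\<Sum>x\<in>C \<union> D. lk k x) + (\<Sum>x\<in>V - (C \<union> D). lk k x)"
            using sum.subset_diff[of "C \<union> D" V "lk k"] CV DV fin by simp
          moreover have "(\<Sum>x\<in>C \<union> D. lk k x) = psum k C + psum k D"
            using sum.union_disjoint[OF fC fD CD] by (simp add: psum_def)
          moreover have "psum k D \<le> q" using BB_psum[OF kB D(1)] .
          ultimately have "(\<Sum>x\<in>V - (C \<union> D). lk k x) > 0" using BB_tot[OF kB] k(2) by linarith
          then obtain y where y: "y \<in> V - (C \<union> D)" "lk k y > 0" using psum_pos[of k "V - (C \<union> D)"] by (auto simp: psum_def)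
          obtain D' where D': "D' \<in> P" "y \<in> D'" using partn_part[OF pt] y(1) by blast
          have "D' \<noteq> C" "D' \<noteq> D" using D' y(1) by auto
          then have "psum v C + psum v D + psum v D' \<le> 2 * q"
            using psum3[OF pt C(1) D(1) D'(1)] DC[symmetric] BB_tot[OF vB] by (metis)
          then have "psum v D' < q" using vC vD q1 by linarith
          then show ?thesis using y D' partn_uniq[OF pt _ D'(1) _ D'(2)] by blast
        qed
      qed
      then obtain y where y: "y \<in> V - C" "lk k y > 0" "\<forall>C'\<in>P. y \<in> C' \<longrightarrow> c \<notin> C' \<longrightarrow> psum v C' < q" by blast
      have cy: "c \<noteq> y" using c(1) y(1) by blast
      have v1: "lk v c \<ge> 1" using c(2) by simp
      have k1: "lk k y \<ge> 1" using y(2) by simp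
      have yV: "y \<in> V" using y(1) by blast
      have cV: "c \<in> V" using c(1) CV by blast
      have v'': "sw v c y \<in> BB P V q"
        by (rule sw_BB[OF pt vB v1 yV]) (use y(3) in blast)
      have k'': "sw k y c \<in> BB P V q"
        by (rule sw_BB[OF pt kB k1 cV]) (use partn_uniq[OF pt _ C(1) _ c(1)] y(1) k(2) in blast)
      have uZ2: "set_mset (add_mset u Z2) \<subseteq> BB P V q" using uB Z2B by simp
      note m1 = msw[OF vB kB cy v1 k1 v'' k'' uZ2]
      define v2 where "v2 = sw v c y"
      have v2B: "v2 \<in> BB P V q" using v'' by (simp add: v2_def)
      have v2r: "lk v2 \<rho> \<ge> 1" using v(2) cr by (simp add: v2_def lookup_sw)
      have "psum v2 C + 1 = psum v C"
        using psum_sw[OF v1 fC, of y] c(1) y(1) by (simp add: v2_def)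
      then have v2C: "psum v2 C < q" using vC by simp
      have v2': "sw v2 \<rho> \<xi> \<in> BB P V q"
        by (rule sw_BB[OF pt v2B v2r xV]) (use partn_uniq[OF pt _ C(1) _ xi(1)] v2C in blast)
      have kZ2: "set_mset (add_mset (sw k y c) Z2) \<subseteq> BB P V q" using k'' Z2B by simp
      note m2 = msw[OF uB v2B xr u1 v2r u' v2' kZ2]
      have eX: "X = add_mset v (add_mset k (add_mset u Z2))" using XZ ZZ1 Z12 by (simp add: add_mset_commute)
      have eX': "add_mset (sw v c y) (add_mset (sw k y c) (add_mset u Z2)) = add_mset u (add_mset v2 (add_mset (sw k y c) Z2))"
        by (simp add: v2_def add_mset_commute)
      have RX: "R X (add_mset (sw u \<xi> \<rho>) (add_mset (sw v2 \<rho> \<xi>) (add_mset (sw k y c) Z2)))"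
        using Rtrans[OF m1(1) m2(1)[folded eX']] eX by simp
      have "sum_mset (add_mset (sw u \<xi> \<rho>) (add_mset (sw v2 \<rho> \<xi>) (add_mset (sw k y c) Z2))) = sum_mset X"
        using m1(2) m2(2)[folded eX'] eX by simp
      moreover have "set_mset (add_mset (sw u \<xi> \<rho>) (add_mset (sw v2 \<rho> \<xi>) (add_mset (sw k y c) Z2))) \<subseteq> BB P V q"
        using m2(3) .
      moreover have "size (add_mset (sw u \<xi> \<rho>) (add_mset (sw v2 \<rho> \<xi>) (add_mset (sw k y c) Z2))) = size X"
        using eX by simp
      ultimately show ?thesis using RX dec
        by (intro exI[of _ "add_mset (sw u \<xi> \<rho>) (add_mset (sw v2 \<rho> \<xi>) (add_mset (sw k y c) Z2))"] exI[of _ "sw u \<xi> \<rho>"]) simp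
    qed
  qed
qed

lemma get:
  assumes w: "w \<in> BB P V q"
  shows "\<forall>X u. set_mset X \<subseteq> BB P V q \<longrightarrow> u \<in># X \<longrightarrow> dd V u w = n \<longrightarrow> set_mset Y \<subseteq> BB P V q \<longrightarrow>
     sum_mset X = w + sum_mset Y \<longrightarrow> size X = Suc (size Y) \<longrightarrow>
     (\<exists>X'. R X (add_mset w X') \<and> set_mset X' \<subseteq> BB P V q \<and> sum_mset X' = sum_mset Y \<and> size X' = size Y)"
proof (induction n rule: less_induct)
  case (less n)
  show ?case
  proof (intro allI impI)
    fix X u
    assume h: "set_mset X \<subseteq> BB P V q" "u \<in># X" "dd V u w = n" "set_mset Y \<subseteq> BB P V q"
      "sum_mset X = w + sum_mset Y" "size X = Suc (size Y)"
    show "\<exists>X'. R X (add_mset w X') \<and> set_mset X' \<subseteq> BB P V q \<and> sum_mset X' = sum_mset Y \<and> size X' = size Y"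
    proof (cases "u = w")
      case True
      define X' where "X' = X - {#w#}"
      have XX: "X = add_mset w X'" using h(2) True by (simp add: X'_def)
      show ?thesis
        using XX h Rrefl by (intro exI[of _ X']) auto
    next
      case False
      obtain X1 u1 where X1: "R X X1" "set_mset X1 \<subseteq> BB P V q" "size X1 = size X" "sum_mset X1 = sum_mset X"
        "u1 \<in># X1" "dd V u1 w < dd V u w"
        using improve[OF h(1,2) w False h(4,5,6)] by blast
      have "\<exists>X'. R X1 (add_mset w X') \<and> set_mset X' \<subseteq> BB P V q \<and> sum_mset X' = sum_mset Y \<and> size X' = size Y"
        using less.IH[of "dd V u1 w"] X1 h by auto
      then show ?thesis using Rtrans[OF X1(1)] by blast
    qed
  qed
qed

lemma mc:
  "set_mset X \<subseteq> BB P V q \<Longrightarrow> set_mset Y \<subseteq> BB P V q \<Longrightarrow> sum_mset X = sum_mset Y \<Longrightarrow> R X Y"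
proof (induction "size X" arbitrary: X Y)
  case 0
  then have X0: "X = {#}" by simp
  have "2 * q * size Y = 0"
    using tot_summ[OF "0.prems"(2)] tot_summ[OF "0.prems"(1)] "0.prems"(3) X0 by simp
  then have "Y = {#}" using q1 by simp
  then show ?case using X0 Rrefl by simp
next
  case (Suc n)
  have "2 * q * size Y = 2 * q * size X"
    using tot_summ[OF Suc.prems(2)] tot_summ[OF Suc.prems(1)] Suc.prems(3) by simp
  then have sY: "size Y = Suc n" using q1 Suc.hyps(2) by simp
  then obtain w Y' where Y: "Y = add_mset w Y'" by (metis size_eq_Suc_imp_eq_union)
  obtain u where u: "u \<in># X" using Suc.hyps(2) by (metis size_eq_Suc_imp_eq_union union_single_eq_member)
  have wB: "w \<in> BB P V q" "set_mset Y' \<subseteq> BB P V q" using Suc.prems(2) Y by auto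
  have "\<exists>X'. R X (add_mset w X') \<and> set_mset X' \<subseteq> BB P V q \<and> sum_mset X' = sum_mset Y' \<and> size X' = size Y'"
    apply (rule get[OF wB(1), of "dd V u w" Y', rule_format, of X u])
    using Suc.prems(1,3) u wB(2) Y Suc.hyps(2) sY by auto
  then obtain X' where X': "R X (add_mset w X')" "set_mset X' \<subseteq> BB P V q" "sum_mset X' = sum_mset Y'" "size X' = size Y'"
    by blast
  have "R X' Y'" using Suc.hyps(1)[of X' Y'] X' Y sY wB(2) by simp
  then have "R (X' + {#w#}) (Y' + {#w#})" using wB(1) by (intro Radd) simp_all
  then show ?case using Rtrans[OF X'(1)] Y by simp
qed

end


definition rep :: "nat \<Rightarrow> ('a \<Rightarrow>\<^sub>0 nat) \<Rightarrow> ('a \<Rightarrow>\<^sub>0 nat)" where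
  "rep n w = (\<Sum>i<n. w)"

definition expo :: "(('a \<Rightarrow>\<^sub>0 nat) \<Rightarrow>\<^sub>0 nat) \<Rightarrow> ('a \<Rightarrow>\<^sub>0 nat)" where
  "expo \<alpha> = (\<Sum>w\<in>ks \<alpha>. rep (lk \<alpha> w) w)"

lemma rep_add: "rep (a + b) w = rep a w + rep b w"
  by (induction b) (simp_all add: rep_def add.assoc)

lemma rep_0 [simp]: "rep 0 w = 0" by (simp add: rep_def)
lemma rep_1 [simp]: "rep 1 w = w" by (simp add: rep_def)
lemma rep_Suc0 [simp]: "rep (Suc 0) w = w" by (simp add: rep_def)

lemma expo_S: "finite S \<Longrightarrow> ks \<alpha> \<subseteq> S \<Longrightarrow> expo \<alpha> = (\<Sum>w\<in>S. rep (lk \<alpha> w) w)"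
  unfolding expo_def by (rule sum.mono_neutral_left) (auto simp: in_keys_iff)

lemma expo_add: "expo (\<alpha> + \<beta>) = expo \<alpha> + expo \<beta>"
proof -
  let ?S = "ks \<alpha> \<union> ks \<beta>"
  have "expo (\<alpha> + \<beta>) = (\<Sum>w\<in>?S. rep (lk (\<alpha> + \<beta>) w) w)"
    by (rule expo_S) (use keys_add[of \<alpha> \<beta>] in auto)
  also have "\<dots> = (\<Sum>w\<in>?S. rep (lk \<alpha> w) w) + (\<Sum>w\<in>?S. rep (lk \<beta> w) w)"
    by (simp add: lookup_add rep_add sum.distrib)
  also have "\<dots> = expo \<alpha> + expo \<beta>" using expo_S[of ?S \<alpha>] expo_S[of ?S \<beta>] by simp
  finally show ?thesis .
qed

lemma expo_single: "expo (sg w 1) = w"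
  by (simp add: expo_def)

lemma expo_zero [simp]: "expo 0 = 0"
  by (simp add: expo_def)

lemma pow_single: "(sg w (1::'k::comm_semiring_1)) ^ n = sg (rep n w) 1"
  by (induction n) (simp_all add: mult_single rep_def add.commute)

lemma prod_single: "(\<Prod>w\<in>S. sg (f w) (1::'k::comm_semiring_1)) = sg (\<Sum>w\<in>S. f w) 1"
  by (induction S rule: infinite_finite_induct) (simp_all add: mult_single)

lemma toric_alt: "toric_map (p :: (('a \<Rightarrow>\<^sub>0 nat) \<Rightarrow>\<^sub>0 nat) \<Rightarrow>\<^sub>0 'k::field) = (\<Sum>\<alpha>\<in>ks p. sg (expo \<alpha>) (lk p \<alpha>))"
  unfolding toric_map_def
proof (rule sum.cong[OF refl])
  fix \<alpha> assume "\<alpha> \<in> ks p"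
  have "(\<Prod>w\<in>ks \<alpha>. sg w (1::'k) ^ lk \<alpha> w) = sg (expo \<alpha>) 1"
    by (simp add: pow_single prod_single expo_def)
  then show "sg 0 (lk p \<alpha>) * (\<Prod>w\<in>ks \<alpha>. sg w 1 ^ lk \<alpha> w) = sg (expo \<alpha>) (lk p \<alpha>)"
    by (simp add: mult_single)
qed

lemma toric_S: "finite S \<Longrightarrow> ks p \<subseteq> S \<Longrightarrow> toric_map (p :: (('a \<Rightarrow>\<^sub>0 nat) \<Rightarrow>\<^sub>0 nat) \<Rightarrow>\<^sub>0 'k::field) = (\<Sum>\<alpha>\<in>S. sg (expo \<alpha>) (lk p \<alpha>))"
  unfolding toric_alt by (rule sum.mono_neutral_left) (auto simp: in_keys_iff)

lemma toric_add: "toric_map ((p :: (('a \<Rightarrow>\<^sub>0 nat) \<Rightarrow>\<^sub>0 nat) \<Rightarrow>\<^sub>0 'k::field) + p') = toric_map p + toric_map p'"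
proof -
  let ?S = "ks p \<union> ks p'"
  have "toric_map (p + p') = (\<Sum>\<alpha>\<in>?S. sg (expo \<alpha>) (lk (p + p') \<alpha>))"
    by (rule toric_S) (use keys_add[of p p'] in auto)
  also have "\<dots> = (\<Sum>\<alpha>\<in>?S. sg (expo \<alpha>) (lk p \<alpha>)) + (\<Sum>\<alpha>\<in>?S. sg (expo \<alpha>) (lk p' \<alpha>))"
    by (simp add: lookup_add single_add sum.distrib)
  also have "\<dots> = toric_map p + toric_map p'" using toric_S[of ?S p] toric_S[of ?S p'] by simp
  finally show ?thesis .
qed

lemma toric_zero [simp]: "toric_map (0 :: (('a \<Rightarrow>\<^sub>0 nat) \<Rightarrow>\<^sub>0 nat) \<Rightarrow>\<^sub>0 'k::field) = 0"
  by (simp add: toric_map_def)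

lemma toric_uminus: "toric_map (- (p :: (('a \<Rightarrow>\<^sub>0 nat) \<Rightarrow>\<^sub>0 nat) \<Rightarrow>\<^sub>0 'k::field)) = - toric_map p"
proof -
  have "toric_map p + toric_map (- p) = 0" using toric_add[of p "- p"] by simp
  then show ?thesis by (simp add: add_eq_0_iff)
qed

lemma toric_diff: "toric_map ((p :: (('a \<Rightarrow>\<^sub>0 nat) \<Rightarrow>\<^sub>0 nat) \<Rightarrow>\<^sub>0 'k::field) - p') = toric_map p - toric_map p'"
  using toric_add[of p "- p'"] toric_uminus[of p'] by simp

lemma toric_single: "toric_map (sg \<gamma> c :: (('a \<Rightarrow>\<^sub>0 nat) \<Rightarrow>\<^sub>0 nat) \<Rightarrow>\<^sub>0 'k::field) = sg (expo \<gamma>) c"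
  by (cases "c = 0") (simp_all add: toric_alt)

lemma toric_sum: "toric_map (\<Sum>i\<in>I. f i :: (('a \<Rightarrow>\<^sub>0 nat) \<Rightarrow>\<^sub>0 nat) \<Rightarrow>\<^sub>0 'k::field) = (\<Sum>i\<in>I. toric_map (f i))"
  by (induction I rule: infinite_finite_induct) (simp_all add: toric_add)

lemma poly_expand: "p = (\<Sum>\<alpha>\<in>ks p. sg \<alpha> (lk p \<alpha>))"
proof (rule poly_mapping_eqI)
  fix \<beta>
  show "lk p \<beta> = lk (\<Sum>\<alpha>\<in>ks p. sg \<alpha> (lk p \<alpha>)) \<beta>"
    by (cases "\<beta> \<in> ks p") (simp_all add: lookup_sum lookup_single when_def in_keys_iff)
qed

lemma toric_mult: "toric_map ((p :: (('a \<Rightarrow>\<^sub>0 nat) \<Rightarrow>\<^sub>0 nat) \<Rightarrow>\<^sub>0 'k::field) * p') = toric_map p * toric_map p'"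
proof -
  have "p * p' = (\<Sum>\<alpha>\<in>ks p. sg \<alpha> (lk p \<alpha>)) * (\<Sum>\<beta>\<in>ks p'. sg \<beta> (lk p' \<beta>))"
    using poly_expand[of p] poly_expand[of p'] by simp
  also have "\<dots> = (\<Sum>\<alpha>\<in>ks p. \<Sum>\<beta>\<in>ks p'. sg (\<alpha> + \<beta>) (lk p \<alpha> * lk p' \<beta>))"
    by (simp add: sum_product mult_single)
  finally have e: "toric_map (p * p') = (\<Sum>\<alpha>\<in>ks p. \<Sum>\<beta>\<in>ks p'. sg (expo \<alpha> + expo \<beta>) (lk p \<alpha> * lk p' \<beta>))"
    by (simp add: toric_sum toric_single expo_add)
  have "toric_map p * toric_map p' = (\<Sum>\<alpha>\<in>ks p. sg (expo \<alpha>) (lk p \<alpha>)) * (\<Sum>\<beta>\<in>ks p'. sg (expo \<beta>) (lk p' \<beta>))"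
    by (simp add: toric_alt)
  also have "\<dots> = (\<Sum>\<alpha>\<in>ks p. \<Sum>\<beta>\<in>ks p'. sg (expo \<alpha> + expo \<beta>) (lk p \<alpha> * lk p' \<beta>))"
    by (simp add: sum_product mult_single)
  finally show ?thesis using e by simp
qed


lemma I0: "0 \<in> ideal_gen R F"
  unfolding ideal_gen_def by (rule CollectI, rule exI[of _ "[]"], rule exI[of _ "[]"]) simp

lemma Iadd: assumes "x \<in> ideal_gen R F" "y \<in> ideal_gen R F" shows "x + y \<in> ideal_gen R F"
proof -
  obtain cs fs where x: "x = sum_list (map2 (*) cs fs)" "length cs = length fs" "set cs \<subseteq> R" "set fs \<subseteq> F"
    using assms(1) unfolding ideal_gen_def by blast
  obtain cs' fs' where y: "y = sum_list (map2 (*) cs' fs')" "length cs' = length fs'" "set cs' \<subseteq> R" "set fs' \<subseteq> F"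
    using assms(2) unfolding ideal_gen_def by blast
  have "x + y = sum_list (map2 (*) (cs @ cs') (fs @ fs'))" using x y by simp
  then show ?thesis using x y unfolding ideal_gen_def by (intro CollectI exI[of _ "cs @ cs'"] exI[of _ "fs @ fs'"]) auto
qed

lemma map2_mult: "length cs = length fs \<Longrightarrow> r * sum_list (map2 (*) cs fs) = sum_list (map2 (*) (map ((*) r) cs) fs)"
  for r :: "'r::comm_ring_1"
  by (induction cs fs rule: list_induct2) (simp_all add: algebra_simps)

lemma Imul: assumes "\<And>a b. a \<in> R \<Longrightarrow> b \<in> R \<Longrightarrow> a * b \<in> R" "r \<in> R" "x \<in> ideal_gen R F"
  shows "r * x \<in> ideal_gen R F"
proof -
  obtain cs fs where x: "x = sum_list (map2 (*) cs fs)" "length cs = length fs" "set cs \<subseteq> R" "set fs \<subseteq> F"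
    using assms(3) unfolding ideal_gen_def by blast
  have "r * x = sum_list (map2 (*) (map ((*) r) cs) fs)" using x map2_mult by simp
  moreover have "set (map ((*) r) cs) \<subseteq> R" using x(3) assms(1,2) by auto
  ultimately show ?thesis using x unfolding ideal_gen_def by (intro CollectI exI[of _ "map ((*) r) cs"] exI[of _ fs]) auto
qed

lemma Igen: "1 \<in> R \<Longrightarrow> f \<in> F \<Longrightarrow> f \<in> ideal_gen R F"
  unfolding ideal_gen_def by (intro CollectI exI[of _ "[1]"] exI[of _ "[f]"]) simp

lemma Iind:
  assumes "x \<in> ideal_gen R F" "Q 0" "\<And>a b. Q a \<Longrightarrow> Q b \<Longrightarrow> Q (a + b)" "\<And>c f. c \<in> R \<Longrightarrow> f \<in> F \<Longrightarrow> Q (c * f)"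
  shows "Q x"
proof -
  obtain cs fs where x: "x = sum_list (map2 (*) cs fs)" "length cs = length fs" "set cs \<subseteq> R" "set fs \<subseteq> F"
    using assms(1) unfolding ideal_gen_def by blast
  have "Q (sum_list (map2 (*) cs fs))" using x(2,3,4)
    by (induction cs fs rule: list_induct2) (auto intro: assms(2,3,4))
  then show ?thesis using x(1) by simp
qed

lemma T_mem: "p \<in> T_ring B \<longleftrightarrow> (\<forall>\<alpha>\<in>ks p. ks \<alpha> \<subseteq> B)"
  by (simp add: T_ring_def)

lemma T_add: "p \<in> T_ring B \<Longrightarrow> p' \<in> T_ring B \<Longrightarrow> p + p' \<in> T_ring B"
  using keys_add[of p p'] unfolding T_mem by blast

lemma T_mult: assumes "p \<in> T_ring B" "p' \<in> T_ring B" shows "p * p' \<in> T_ring B"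
  unfolding T_mem
proof
  fix \<gamma> assume "\<gamma> \<in> ks (p * p')"
  then obtain a b where ab: "\<gamma> = a + b" "a \<in> ks p" "b \<in> ks p'" using keys_mult[of p p'] by blast
  then show "ks \<gamma> \<subseteq> B" using assms keys_add[of a b] unfolding T_mem by blast
qed

lemma T_single: "ks \<alpha> \<subseteq> B \<Longrightarrow> sg \<alpha> c \<in> T_ring B"
  unfolding T_mem by simp

lemma T_const: "sg 0 c \<in> T_ring B"
  unfolding T_mem by simp

lemma T_one: "1 \<in> T_ring B"
  using T_const[of 1 B] by simp

lemma T_sub: "p \<in> T_ring B \<Longrightarrow> ks p' \<subseteq> ks p \<Longrightarrow> p' \<in> T_ring B"
  unfolding T_mem by blast

definition pm :: "('a \<Rightarrow>\<^sub>0 nat) multiset \<Rightarrow> (('a \<Rightarrow>\<^sub>0 nat) \<Rightarrow>\<^sub>0 nat)" where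
  "pm X = (\<Sum>w\<in>#X. sg w 1)"

lemma pm_add: "pm (X + Y) = pm X + pm Y"
  by (simp add: pm_def)

lemma lk_pm: "lk (pm X) w = count X w"
  by (induction X) (auto simp: pm_def lookup_add lookup_single when_def)

lemma ks_pm: "ks (pm X) = set_mset X"
  by (auto simp: in_keys_iff lk_pm)

lemma expo_single_Suc: "expo (sg w (Suc 0)) = w"
  using expo_single[of w] by simp

lemma expo_pm: "expo (pm X) = sum_mset X"
  by (induction X) (simp_all add: pm_def expo_add expo_single_Suc)

lemma pm_surj: "\<exists>X. \<alpha> = pm X"
proof -
  have "finite {x. 0 < lk \<alpha> x}" using finite_keys[of \<alpha>] by (simp add: in_keys_iff[symmetric])
  then have c: "count (Abs_multiset (lk \<alpha>)) = lk \<alpha>" by (simp add: count_Abs_multiset)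
  have "\<alpha> = pm (Abs_multiset (lk \<alpha>))" by (rule poly_mapping_eqI) (simp add: lk_pm c)
  then show ?thesis by blast
qed

lemma zmon_pm: "zmon u v = sg (pm {#u, v#}) 1"
  by (simp add: zmon_def pm_def)


lemma sym_in:
  assumes "f \<in> (sym_exchange_binomials B :: ((('a \<Rightarrow>\<^sub>0 nat) \<Rightarrow>\<^sub>0 nat) \<Rightarrow>\<^sub>0 'k::field) set)"
  shows "f \<in> T_ring B \<and> toric_map f = 0"
proof -
  obtain u v u0 v0 \<xi> \<rho> where h: "f = zmon u v - zmon u0 v0" "u \<in> B" "v \<in> B" "lk u \<xi> > lk v \<xi>"
    "lk u \<rho> < lk v \<rho>" "u0 = sw u \<xi> \<rho>" "v0 = sw v \<rho> \<xi>" "u0 \<in> B" "v0 \<in> B"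
    using assms unfolding sym_exchange_binomials_def sw_def by blast
  have e: "u0 + v0 = u + v" using sw_sum[of u \<xi> v \<rho>] h(4,5,6,7) by simp
  have T1: "zmon u v \<in> T_ring B" unfolding zmon_pm using h(2,3) by (intro T_single) (simp add: ks_pm)
  have T2: "zmon u0 v0 \<in> T_ring B" unfolding zmon_pm using h(8,9) by (intro T_single) (simp add: ks_pm)
  have "f \<in> T_ring B"
    using T_add[OF T1 T_mult[OF T_const[of "-1"] T2]] h(1) by (simp add: single_uminus)
  moreover have "toric_map f = 0"
    using h(1) e by (simp add: toric_diff zmon_pm toric_single expo_pm add.commute)
  ultimately show ?thesis by blast
qed

lemma ideal_sub:
  assumes "x \<in> ideal_gen (T_ring B) (sym_exchange_binomials B :: ((('a \<Rightarrow>\<^sub>0 nat) \<Rightarrow>\<^sub>0 nat) \<Rightarrow>\<^sub>0 'k::field) set)"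
  shows "x \<in> toric_ideal B"
proof -
  have "x \<in> T_ring B \<and> toric_map x = 0"
  proof (rule Iind[OF assms])
    show "0 \<in> T_ring B \<and> toric_map (0 :: ((('a \<Rightarrow>\<^sub>0 nat) \<Rightarrow>\<^sub>0 nat) \<Rightarrow>\<^sub>0 'k)) = 0"
      by (simp add: T_mem)
    show "a + b \<in> T_ring B \<and> toric_map (a + b) = 0" if "a \<in> T_ring B \<and> toric_map a = 0" "b \<in> T_ring B \<and> toric_map b = 0" for a b
      using that T_add by (auto simp: toric_add)
    show "c * f \<in> T_ring B \<and> toric_map (c * f) = 0" if "c \<in> T_ring B" "f \<in> sym_exchange_binomials B" for c f
      using sym_in[OF that(2)] T_mult[OF that(1)] by (simp add: toric_mult)
  qed
  then show ?thesis by (simp add: toric_ideal_def)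
qed

lemma conn:
  fixes \<alpha> \<beta> :: "('a \<Rightarrow>\<^sub>0 nat) \<Rightarrow>\<^sub>0 nat"
  assumes pt: "partn P V" and q1: "q \<ge> 1" and a: "ks \<alpha> \<subseteq> BB P V q" and b: "ks \<beta> \<subseteq> BB P V q"
    and e: "expo \<alpha> = expo \<beta>"
  shows "sg \<alpha> (1::'k::field) - sg \<beta> 1 \<in> ideal_gen (T_ring (BB P V q)) (sym_exchange_binomials (BB P V q))"
proof -
  let ?B = "BB P V q"
  let ?I = "ideal_gen (T_ring ?B) (sym_exchange_binomials ?B) :: ((('a \<Rightarrow>\<^sub>0 nat) \<Rightarrow>\<^sub>0 nat) \<Rightarrow>\<^sub>0 'k) set"
  define R where "R X Y \<longleftrightarrow> sg (pm X) (1::'k) - sg (pm Y) 1 \<in> ?I" for X Y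
  have mulT: "\<And>a b. a \<in> T_ring ?B \<Longrightarrow> b \<in> T_ring ?B \<Longrightarrow> a * b \<in> T_ring ?B" by (rule T_mult)
  have neg: "- x \<in> ?I" if "x \<in> ?I" for x
    using Imul[OF mulT T_const[of "-1"] that] by (simp add: single_uminus)
  have Rrefl: "R X X" for X unfolding R_def by (simp add: I0)
  have Rsym: "R Y X" if "R X Y" for X Y using neg[OF that[unfolded R_def]] unfolding R_def by simp
  have Rtrans: "R X Z" if "R X Y" "R Y Z" for X Y Z
    using Iadd[OF that[unfolded R_def]] unfolding R_def by simp
  have Radd: "R (X + Z) (Y + Z)" if "R X Y" "set_mset Z \<subseteq> ?B" for X Y Z
  proof -
    have "sg (pm Z) (1::'k) \<in> T_ring ?B" using that(2) by (intro T_single) (simp add: ks_pm)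
    from Imul[OF mulT this that(1)[unfolded R_def]]
    show ?thesis unfolding R_def by (simp add: pm_add right_diff_distrib mult_single add.commute)
  qed
  have Rex: "R {#u, v#} {#sw u \<xi> \<rho>, sw v \<rho> \<xi>#}"
    if "u \<in> ?B" "v \<in> ?B" "lk u \<xi> > lk v \<xi>" "lk u \<rho> < lk v \<rho>" "sw u \<xi> \<rho> \<in> ?B" "sw v \<rho> \<xi> \<in> ?B" for u v \<xi> \<rho>
  proof -
    have "zmon u v - zmon (sw u \<xi> \<rho>) (sw v \<rho> \<xi>) \<in> (sym_exchange_binomials ?B :: ((('a \<Rightarrow>\<^sub>0 nat) \<Rightarrow>\<^sub>0 nat) \<Rightarrow>\<^sub>0 'k) set)"
      unfolding sym_exchange_binomials_def sw_def using that unfolding sw_def by blast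
    then have "zmon u v - zmon (sw u \<xi> \<rho>) (sw v \<rho> \<xi>) \<in> ?I" by (rule Igen[OF T_one])
    then show ?thesis unfolding R_def zmon_pm .
  qed
  obtain X where X: "\<alpha> = pm X" using pm_surj by blast
  obtain Y where Y: "\<beta> = pm Y" using pm_surj by blast
  have "R X Y"
  proof (rule mc[OF pt q1, of R])
    show "\<And>X. R X X" by (rule Rrefl)
    show "\<And>X Y. R X Y \<Longrightarrow> R Y X" by (rule Rsym)
    show "\<And>X Y Z. R X Y \<Longrightarrow> R Y Z \<Longrightarrow> R X Z" by (rule Rtrans)
    show "\<And>X Y Z. R X Y \<Longrightarrow> set_mset Z \<subseteq> ?B \<Longrightarrow> R (X + Z) (Y + Z)" by (rule Radd)
    show "\<And>u v \<xi> \<rho>. u \<in> ?B \<Longrightarrow> v \<in> ?B \<Longrightarrow> lk u \<xi> > lk v \<xi> \<Longrightarrow> lk u \<rho> < lk v \<rho>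
       \<Longrightarrow> sw u \<xi> \<rho> \<in> ?B \<Longrightarrow> sw v \<rho> \<xi> \<in> ?B \<Longrightarrow> R {#u, v#} {#sw u \<xi> \<rho>, sw v \<rho> \<xi>#}"
      by (rule Rex)
    show "set_mset X \<subseteq> ?B" using a X by (simp add: ks_pm)
    show "set_mset Y \<subseteq> ?B" using b Y by (simp add: ks_pm)
    show "sum_mset X = sum_mset Y" using e X Y by (simp add: expo_pm)
  qed
  then show ?thesis unfolding R_def X Y .
qed


lemma toric_sub:
  assumes pt: "partn P V" and q1: "q \<ge> 1"
  shows "\<forall>p. card (ks p) = n \<longrightarrow> p \<in> toric_ideal (BB P V q) \<longrightarrow>
    p \<in> (ideal_gen (T_ring (BB P V q)) (sym_exchange_binomials (BB P V q)) :: ((('a \<Rightarrow>\<^sub>0 nat) \<Rightarrow>\<^sub>0 nat) \<Rightarrow>\<^sub>0 'k::field) set)"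
proof (induction n rule: less_induct)
  case (less n)
  let ?B = "BB P V q"
  let ?I = "ideal_gen (T_ring ?B) (sym_exchange_binomials ?B) :: ((('a \<Rightarrow>\<^sub>0 nat) \<Rightarrow>\<^sub>0 nat) \<Rightarrow>\<^sub>0 'k) set"
  show ?case
  proof (intro allI impI)
    fix p :: "(('a \<Rightarrow>\<^sub>0 nat) \<Rightarrow>\<^sub>0 nat) \<Rightarrow>\<^sub>0 'k"
    assume cp: "card (ks p) = n" and pI: "p \<in> toric_ideal ?B"
    have pT: "p \<in> T_ring ?B" and p0: "toric_map p = 0" using pI by (auto simp: toric_ideal_def)
    show "p \<in> ?I"
    proof (cases "p = 0")
      case True then show ?thesis by (simp add: I0)
    next
      case False
      then obtain \<alpha> where a: "\<alpha> \<in> ks p" by (metis keys_eq_empty ex_in_conv)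
      define c where "c = lk p \<alpha>"
      have c0: "c \<noteq> 0" using a by (simp add: c_def in_keys_iff)
      have "\<exists>\<beta>\<in>ks p. \<beta> \<noteq> \<alpha> \<and> expo \<beta> = expo \<alpha>"
      proof (rule ccontr)
        assume N: "\<not> ?thesis"
        have "lk (toric_map p) (expo \<alpha>) = (\<Sum>\<beta>\<in>ks p. (if expo \<beta> = expo \<alpha> then lk p \<beta> else 0))"
          by (simp add: toric_alt lookup_sum lookup_single when_def)
        also have "\<dots> = (if expo \<alpha> = expo \<alpha> then lk p \<alpha> else 0) + (\<Sum>\<beta>\<in>ks p - {\<alpha>}. (if expo \<beta> = expo \<alpha> then lk p \<beta> else 0))"
          using sum.remove[OF finite_keys a] by blast
        also have "(\<Sum>\<beta>\<in>ks p - {\<alpha>}. (if expo \<beta> = expo \<alpha> then lk p \<beta> else 0)) = 0"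
          using N by (intro sum.neutral) auto
        finally have "lk (toric_map p) (expo \<alpha>) = c" by (simp add: c_def)
        then show False using p0 c0 by simp
      qed
      then obtain \<beta> where b: "\<beta> \<in> ks p" "\<beta> \<noteq> \<alpha>" "expo \<beta> = expo \<alpha>" by blast
      define p' where "p' = p - sg \<alpha> c + sg \<beta> c"
      have lp': "lk p' \<gamma> = lk p \<gamma> - (if \<gamma> = \<alpha> then c else 0) + (if \<gamma> = \<beta> then c else 0)" for \<gamma>
        by (simp add: p'_def lookup_add lookup_minus lookup_single when_def)
      have kp': "ks p' \<subseteq> ks p - {\<alpha>}"
      proof
        fix \<gamma> assume g: "\<gamma> \<in> ks p'"
        then have "lk p' \<gamma> \<noteq> 0" by (simp add: in_keys_iff)
        then show "\<gamma> \<in> ks p - {\<alpha>}" using lp'[of \<gamma>] b(1,2) by (auto simp: c_def in_keys_iff split: if_splits)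
      qed
      have "card (ks p') < n"
      proof -
        have "card (ks p') \<le> card (ks p - {\<alpha>})" using kp' by (intro card_mono) auto
        also have "\<dots> < card (ks p)" by (rule card_Diff1_less[OF finite_keys a])
        finally show ?thesis using cp by simp
      qed
      moreover have "p' \<in> toric_ideal ?B"
      proof -
        have "p' \<in> T_ring ?B" using T_sub[OF pT] kp' by blast
        moreover have "toric_map p' = 0" using p0 b(3) by (simp add: p'_def toric_add toric_diff toric_single)
        ultimately show ?thesis by (simp add: toric_ideal_def)
      qed
      ultimately have p'I: "p' \<in> ?I" using less.IH by blast
      have ka: "ks \<alpha> \<subseteq> ?B" "ks \<beta> \<subseteq> ?B" using pT a b(1) by (auto simp: T_mem)
      have "sg \<alpha> (1::'k) - sg \<beta> 1 \<in> ?I" using conn[OF pt q1 ka b(3)[symmetric]] .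
      then have "sg 0 c * (sg \<alpha> (1::'k) - sg \<beta> 1) \<in> ?I"
        by (intro Imul[where R="T_ring ?B"]) (simp_all add: T_mult T_const)
      then have "p' + sg 0 c * (sg \<alpha> (1::'k) - sg \<beta> 1) \<in> ?I" by (rule Iadd[OF p'I])
      moreover have "p' + sg 0 c * (sg \<alpha> (1::'k) - sg \<beta> 1) = p"
        by (simp add: p'_def right_diff_distrib mult_single)
      ultimately show ?thesis by simp
    qed
  qed
qed

lemma toric_eq:
  assumes pt: "partn P V" and q1: "q \<ge> 1"
  shows "(toric_ideal (BB P V q) :: ((('a \<Rightarrow>\<^sub>0 nat) \<Rightarrow>\<^sub>0 nat) \<Rightarrow>\<^sub>0 'k::field) set)
     = ideal_gen (T_ring (BB P V q)) (sym_exchange_binomials (BB P V q))"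
  using toric_sub[OF pt q1] ideal_sub by blast

theorem theorem3p1:
  fixes V :: "'a set" and E :: "'a set set"
  assumes "simple_graph V E" and "no_isolated V E" and "V \<noteq> {}"
  shows "((\<exists>q\<ge>1. polymatroid (min_gens E q)) \<longleftrightarrow> (\<forall>q\<ge>1. polymatroid (min_gens E q)))
    \<and> ((\<forall>q\<ge>1. polymatroid (min_gens E q)) \<longleftrightarrow> complete_multipartite V E)
    \<and> (complete_multipartite V E \<longrightarrow> (\<forall>q\<ge>1.
          (toric_ideal (min_gens E q) :: ((('a \<Rightarrow>\<^sub>0 nat) \<Rightarrow>\<^sub>0 nat) \<Rightarrow>\<^sub>0 'k::field) set)
          = ideal_gen (T_ring (min_gens E q)) (sym_exchange_binomials (min_gens E q))))"
proof -
  have c1: "complete_multipartite V E" if "\<exists>q\<ge>1. polymatroid (min_gens E q)"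
    using poly_imp_cm[OF assms] that by blast
  have c2: "\<forall>q\<ge>1. polymatroid (min_gens E q)" if "complete_multipartite V E"
    using cm_imp_poly[OF assms(1) that] by blast
  have c3: "(toric_ideal (min_gens E q) :: ((('a \<Rightarrow>\<^sub>0 nat) \<Rightarrow>\<^sub>0 nat) \<Rightarrow>\<^sub>0 'k::field) set)
          = ideal_gen (T_ring (min_gens E q)) (sym_exchange_binomials (min_gens E q))"
    if cm: "complete_multipartite V E" and q: "q \<ge> 1" for q
  proof -
    obtain P where P: "finite P" "{} \<notin> P" "\<Union>P = V" "\<forall>A\<in>P. \<forall>B\<in>P. A \<noteq> B \<longrightarrow> A \<inter> B = {}"
       "E = cmE P"
      using cm unfolding complete_multipartite_def cmE_def by blast
    have fin: "finite V" using assms(1) by (simp add: simple_graph_def)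
    have pt: "partn P V" using P fin by (simp add: partn_def)
    have B: "min_gens E q = BB P V q" using min_gens_eq[OF assms(1)] pow_gens_BB[OF pt] P(5) by simp
    show ?thesis unfolding B by (rule toric_eq[OF pt q])
  qed
  show ?thesis
  proof (intro conjI)
    show "(\<exists>q\<ge>1. polymatroid (min_gens E q)) \<longleftrightarrow> (\<forall>q\<ge>1. polymatroid (min_gens E q))"
      using c1 c2 by blast
    show "(\<forall>q\<ge>1. polymatroid (min_gens E q)) \<longleftrightarrow> complete_multipartite V E"
      using c1 c2 by blast
    show "complete_multipartite V E \<longrightarrow> (\<forall>q\<ge>1.
          (toric_ideal (min_gens E q) :: ((('a \<Rightarrow>\<^sub>0 nat) \<Rightarrow>\<^sub>0 nat) \<Rightarrow>\<^sub>0 'k::field) set)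
          = ideal_gen (T_ring (min_gens E q)) (sym_exchange_binomials (min_gens E q)))"
      using c3 by blast
  qed
qed


end
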